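(* Under the standing assumptions (in which the $\sigma_l$ are only required to be left- and right-differentiable), with $\lambda>0$, $1\le p<\infty$ and $\Omega\in\{\Omega_{in},\Omega_{out}\}$, for every $B\in\mathbb{R}$ the set of dimension tuples $\mathbf{d}=(d_1,\dots,d_{L-1})$ for which there exists a proper $B$-local minimum $(\mathbf{d},\mathbf{W})$ of $E$ is bounded.
   Context: Network: for dimensions $d_0,\dots,d_L$ and weights $\mathbf{W}=(W_1,\dots,W_L)$, $W_l\in\mathbb{R}^{d_{l-1}\times d_l}$, define for a row vector $x\in\mathbb{R}^{d_0}$: $x_0=x$, $z_l=x_{l-1}W_l$, $x_l=\sigma_l.(z_l)$ (elementwise), $f(\mathbf{W},x)=x_L$; $d_0,d_L$ are fixed and $d_1,\dots,d_{L-1}$ vary. $E(\mathbf{d},\mathbf{W})=\frac{1}{|D|}\sum_{(x,y)\in D}e(f(\mathbf{W},x),y)+\Omega(\mathbf{W},\lambda,p)$ with $D$ a finite dataset of pairs $(x,y)$, $x\in\mathbb{R}^{d_0}$, $y\in Y$. $\Omega_{in}(\mathbf{W},\lambda,p)=\lambda\sum_{l=1}^L\sum_{j=1}^{d_l}\|(W_l(i,j))_{i}\|_p$, $\Omega_{out}(\mathbf{W},\lambda,p)=\lambda\sum_{l=1}^L\sum_{i=1}^{d_{l-1}}\|(W_l(i,j))_{j}\|_p$. Standing assumptions: each $\sigma_l$ is left- and right-differentiable everywhere, and there are functions $b_{1,l},b_{2,l}:\mathbb{R}_{\ge0}\to\mathbb{R}_{\ge0}$ with $|\sigma_l(s)|\le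 b_{1,l}(S)|s|$ and $|\sigma_l^{\leftarrow}(s)|,|\sigma_l^{\rightarrow}(s)|\le b_{2,l}(S)$ whenever $|s|\le S$; $e$ is nonnegative, differentiable in its first argument, and there is $b_3$ with $e(v,y)\le S\Rightarrow\|\partial e(v,y)/\partial v\|_\infty\le b_3(S)$. Definitions: The fan-in of hidden unit $j$ in layer $l$ ($1\le l\le L-1$) is column $j$ of $W_l$; its fan-out is row $j$ of $W_{l+1}$. A pair $(\mathbf{d},\mathbf{W})$ is a local minimum of $E$ if $\mathbf{W}$ is a local minimum of $E(\mathbf{d},\cdot)$ with $\mathbf{d}$ fixed; it is $B$-locally minimal if moreover $E(\mathbf{d},\mathbf{W})\le B$. The proper dimensionality of $\mathbf{W}$ is the dimension tuple obtained by deleting all hidden units whose fan-in or fan-out (or both) is the zero vector; $(\mathbf{d},\mathbf{W})$ is proper if $\mathbf{d}$ equals the proper dimensionality of $\mathbf{W}$. A proper $B$-local minimum is a $B$-locally minimal local minimum that is proper. *)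

theory Defs
  imports "HOL-Analysis.Analysis"
begin

text \<open>Weights: W l i j is entry (i,j) of the matrix W_l (layer l >= 1, row i < d (l-1),
  column j < d l). Dimension tuples: d :: nat => nat, with d 0 = d_0, d L = d_L.
  Vectors of hidden layers are nat => real (only indices < d l matter).
  The output space R^{d_L} is the type real^'o with d_L = CARD('o), identified with
  index set {..<d_L} via a fixed bijection.\<close>

definition out_idx :: "nat \<Rightarrow> 'o::finite" where
  "out_idx = (SOME f. bij_betw f {..<CARD('o)} (UNIV::'o set))"

definition to_outvec :: "(nat \<Rightarrow> real) \<Rightarrow> real^'o::finite" where
  "to_outvec v = (\<chi> k. v (inv_into {..<CARD('o)} out_idx k))"

fun fwd :: "(nat \<Rightarrow> real \<Rightarrow> real) \<Rightarrow> (nat \<Rightarrow> nat) \<Rightarrow> (nat \<Rightarrow> nat \<Rightarrow> nat \<Rightarrow> real)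
    \<Rightarrow> (nat \<Rightarrow> real) \<Rightarrow> nat \<Rightarrow> nat \<Rightarrow> real" where
  "fwd \<sigma> d W x 0 = x"
| "fwd \<sigma> d W x (Suc l) = (\<lambda>j. \<sigma> (Suc l) (\<Sum>i<d l. fwd \<sigma> d W x l i * W (Suc l) i j))"

definition net :: "(nat \<Rightarrow> real \<Rightarrow> real) \<Rightarrow> nat \<Rightarrow> (nat \<Rightarrow> nat) \<Rightarrow> (nat \<Rightarrow> nat \<Rightarrow> nat \<Rightarrow> real)
    \<Rightarrow> (nat \<Rightarrow> real) \<Rightarrow> real^'o::finite" where
  "net \<sigma> L d W x = to_outvec (fwd \<sigma> d W x L)"

definition Omega_in :: "real \<Rightarrow> real \<Rightarrow> nat \<Rightarrow> (nat \<Rightarrow> nat) \<Rightarrow> (nat \<Rightarrow> nat \<Rightarrow> nat \<Rightarrow> real) \<Rightarrow> real" where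
  "Omega_in lam p L d W =
     lam * (\<Sum>l\<in>{1..L}. \<Sum>j<d l. (\<Sum>i<d (l-1). \<bar>W l i j\<bar> powr p) powr (1/p))"

definition Omega_out :: "real \<Rightarrow> real \<Rightarrow> nat \<Rightarrow> (nat \<Rightarrow> nat) \<Rightarrow> (nat \<Rightarrow> nat \<Rightarrow> nat \<Rightarrow> real) \<Rightarrow> real" where
  "Omega_out lam p L d W =
     lam * (\<Sum>l\<in>{1..L}. \<Sum>i<d (l-1). (\<Sum>j<d l. \<bar>W l i j\<bar> powr p) powr (1/p))"

definition energy :: "(nat \<Rightarrow> real \<Rightarrow> real) \<Rightarrow> (real^'o::finite \<Rightarrow> 'y \<Rightarrow> real)
    \<Rightarrow> ((nat \<Rightarrow> real) \<times> 'y) set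
    \<Rightarrow> ((nat \<Rightarrow> nat) \<Rightarrow> (nat \<Rightarrow> nat \<Rightarrow> nat \<Rightarrow> real) \<Rightarrow> real)
    \<Rightarrow> nat \<Rightarrow> (nat \<Rightarrow> nat) \<Rightarrow> (nat \<Rightarrow> nat \<Rightarrow> nat \<Rightarrow> real) \<Rightarrow> real" where
  "energy \<sigma> e D \<Omega> L d W =
     (\<Sum>(x,y)\<in>D. e (net \<sigma> L d W x) y) / real (card D) + \<Omega> d W"

definition is_local_min ::
  "((nat \<Rightarrow> nat) \<Rightarrow> (nat \<Rightarrow> nat \<Rightarrow> nat \<Rightarrow> real) \<Rightarrow> real) \<Rightarrow> nat \<Rightarrow> (nat \<Rightarrow> nat)
    \<Rightarrow> (nat \<Rightarrow> nat \<Rightarrow> nat \<Rightarrow> real) \<Rightarrow> bool" where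
  "is_local_min E L d W \<longleftrightarrow>
     (\<exists>\<epsilon>>0. \<forall>W'. (\<forall>l\<in>{1..L}. \<forall>i<d (l-1). \<forall>j<d l. \<bar>W' l i j - W l i j\<bar> < \<epsilon>)
                   \<longrightarrow> E d W \<le> E d W')"

definition proper_dim :: "(nat \<Rightarrow> nat) \<Rightarrow> (nat \<Rightarrow> nat \<Rightarrow> nat \<Rightarrow> real) \<Rightarrow> nat \<Rightarrow> nat" where
  "proper_dim d W l = card {j. j < d l \<and> (\<exists>i<d (l-1). W l i j \<noteq> 0)
                                     \<and> (\<exists>k<d (Suc l). W (Suc l) j k \<noteq> 0)}"

definition is_proper :: "nat \<Rightarrow> (nat \<Rightarrow> nat) \<Rightarrow> (nat \<Rightarrow> nat \<Rightarrow> nat \<Rightarrow> real) \<Rightarrow> bool" where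
  "is_proper L d W \<longleftrightarrow> (\<forall>l\<in>{1..<L}. d l = proper_dim d W l)"

end

theory Submission
  imports Defs
begin

lemma sig_loc:
  fixes f :: "real \<Rightarrow> real"
  assumes L: "(f has_real_derivative Dl) (at_left z)" and R: "(f has_real_derivative Dr) (at_right z)"
    and bl: "\<bar>Dl\<bar> \<le> M" and br: "\<bar>Dr\<bar> \<le> M"
  shows "\<exists>\<delta>>0. \<forall>h. \<bar>h\<bar> < \<delta> \<longrightarrow> \<bar>f (z+h) - f z\<bar> \<le> (M+1)*\<bar>h\<bar>"
proof -
  have tr: "((\<lambda>y. (f y - f z)/(y - z)) \<longlongrightarrow> Dr) (at_right z)"
    using R by (simp add: has_field_derivative_iff)
  have tl: "((\<lambda>y. (f y - f z)/(y - z)) \<longlongrightarrow> Dl) (at_left z)"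
    using L by (simp add: has_field_derivative_iff)
  have "eventually (\<lambda>y. dist ((f y - f z)/(y - z)) Dr < 1) (at_right z)"
    using tendstoD[OF tr] by simp
  then obtain b where b: "b > z" "\<And>y. y > z \<Longrightarrow> y < b \<Longrightarrow> dist ((f y - f z)/(y - z)) Dr < 1"
    unfolding eventually_at_right_field by blast
  have "eventually (\<lambda>y. dist ((f y - f z)/(y - z)) Dl < 1) (at_left z)"
    using tendstoD[OF tl] by simp
  then obtain a where a: "a < z" "\<And>y. y > a \<Longrightarrow> y < z \<Longrightarrow> dist ((f y - f z)/(y - z)) Dl < 1"
    unfolding eventually_at_left_field by blast
  show ?thesis
  proof (intro exI[of _ "min (b - z) (z - a)"] conjI allI impI)
    show "min (b - z) (z - a) > 0" using a b by simp
    fix h :: real assume h: "\<bar>h\<bar> < min (b - z) (z - a)"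
    consider "h = 0" | "h > 0" | "h < 0" by linarith
    then show "\<bar>f (z+h) - f z\<bar> \<le> (M+1)*\<bar>h\<bar>"
    proof cases
      case 2
      have "dist ((f (z+h) - f z)/h) Dr < 1" using b(2)[of "z+h"] h 2 by simp
      hence "\<bar>(f (z+h) - f z)/h\<bar> < \<bar>Dr\<bar> + 1" by (simp add: dist_real_def)
      hence "\<bar>f (z+h) - f z\<bar> / \<bar>h\<bar> < M + 1" using br by (simp add: abs_divide)
      moreover have "\<bar>h\<bar> > 0" using 2 by simp
      ultimately show ?thesis by (simp add: pos_divide_less_eq)
    next
      case 3
      have "dist ((f (z+h) - f z)/h) Dl < 1" using a(2)[of "z+h"] h 3 by simp
      hence "\<bar>(f (z+h) - f z)/h\<bar> < \<bar>Dl\<bar> + 1" by (simp add: dist_real_def)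
      hence "\<bar>f (z+h) - f z\<bar> / \<bar>h\<bar> < M + 1" using bl by (simp add: abs_divide)
      moreover have "\<bar>h\<bar> > 0" using 3 by simp
      ultimately show ?thesis by (simp add: pos_divide_less_eq)
    qed simp
  qed
qed

lemma sig_ev:
  fixes f :: "real \<Rightarrow> real"
  assumes d: "\<exists>\<delta>>0. \<forall>h. \<bar>h\<bar> < \<delta> \<longrightarrow> \<bar>f (z+h) - f z\<bar> \<le> K*\<bar>h\<bar>"
    and g: "eventually (\<lambda>t. \<bar>g t\<bar> \<le> t*C) (at_right 0)"
  shows "eventually (\<lambda>t. \<bar>f (z + g t) - f z\<bar> \<le> K*\<bar>g t\<bar>) (at_right (0::real))"
proof -
  obtain \<delta> where dp: "\<delta> > 0" and dd: "\<forall>h. \<bar>h\<bar> < \<delta> \<longrightarrow> \<bar>f (z+h) - f z\<bar> \<le> K*\<bar>h\<bar>"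
    using d by blast
  have "((\<lambda>t. t*C) \<longlongrightarrow> 0*C) (at_right (0::real))"
    by (intro tendsto_intros)
  hence "eventually (\<lambda>t. t*C < \<delta>) (at_right (0::real))"
    using dp by (auto dest: order_tendstoD(2))
  with g show ?thesis
    by eventually_elim (use dd in auto)
qed

lemma entry_le_pnorm:
  fixes a :: "'a \<Rightarrow> real"
  assumes "finite J" "j \<in> J" "p > 0"
  shows "\<bar>a j\<bar> \<le> (\<Sum>j\<in>J. \<bar>a j\<bar> powr p) powr (1/p)"
proof -
  have "\<bar>a j\<bar> = (\<bar>a j\<bar> powr p) powr (1/p)"
    using assms(3) by (cases "a j = 0") (auto simp: powr_powr)
  also have "\<dots> \<le> (\<Sum>j\<in>J. \<bar>a j\<bar> powr p) powr (1/p)"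
    using assms by (intro powr_mono2 member_le_sum) auto
  finally show ?thesis .
qed

lemma out_idx_bij: "bij_betw (out_idx :: nat \<Rightarrow> 'o::finite) {..<CARD('o)} UNIV"
proof -
  have "\<exists>f::nat \<Rightarrow> 'o. bij_betw f {..<CARD('o)} UNIV"
    using ex_bij_betw_nat_finite[of "UNIV :: 'o set"] by (auto simp: atLeast0LessThan)
  thus ?thesis unfolding out_idx_def by (rule someI_ex)
qed

lemma sum_outvec:
  "(\<Sum>k\<in>UNIV. \<bar>(to_outvec v - to_outvec w :: real^'o::finite) $ k\<bar>) = (\<Sum>n<CARD('o). \<bar>v n - w n\<bar>)"
proof -
  have b: "bij_betw (inv_into {..<CARD('o)} (out_idx :: nat \<Rightarrow> 'o)) UNIV {..<CARD('o)}"
    using bij_betw_inv_into[OF out_idx_bij] .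
  show ?thesis
    unfolding to_outvec_def
    using sum.reindex_bij_betw[OF b, of "\<lambda>n. \<bar>v n - w n\<bar>"] by simp
qed

lemma loss_change:
  fixes e :: "real^'o::finite \<Rightarrow> 'y \<Rightarrow> real"
  assumes e_diff: "\<forall>v y. (\<lambda>w. e w y) differentiable (at v)"
    and e_grad: "\<forall>S v y De. e v y \<le> S \<longrightarrow> ((\<lambda>w. e w y) has_derivative De) (at v) \<longrightarrow>
         (\<forall>k. \<bar>De (axis k 1)\<bar> \<le> b3 S)"
    and le: "e (to_outvec u) y \<le> SE"
    and ev: "eventually (\<lambda>t. (\<Sum>n<CARD('o). \<bar>u' t n - u n\<bar>) \<le> t*C) (at_right 0)"
  shows "eventually (\<lambda>t. e (to_outvec (u' t)) y - e (to_outvec u) y \<le> (b3 SE + 1) * (t*C)) (at_right (0::real))"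
proof -
  let ?a = "to_outvec u :: real^'o"
  obtain De where De: "((\<lambda>w. e w y) has_derivative De) (at ?a)"
    using e_diff unfolding differentiable_def by blast
  have lin: "linear De" using De has_derivative_linear by blast
  have gr: "\<And>k. \<bar>De (axis k 1)\<bar> \<le> b3 SE" using e_grad le De by blast
  obtain d where dp: "d > 0" and dd: "\<forall>w. norm (w - ?a) < d \<longrightarrow> norm (e w y - e ?a y - De (w - ?a)) \<le> 1 * norm (w - ?a)"
    using De unfolding has_derivative_at_alt by (meson zero_less_one)
  have Dh: "\<bar>De h\<bar> \<le> b3 SE * (\<Sum>k\<in>UNIV. \<bar>h$k\<bar>)" for h :: "real^'o"
  proof -
    have "De h = De (\<Sum>k\<in>UNIV. h$k *s axis k 1)" by (simp add: basis_expansion)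
    also have "\<dots> = (\<Sum>k\<in>UNIV. h$k * De (axis k 1))"
      using lin by (simp add: linear_sum linear_scale scalar_mult_eq_scaleR)
    finally have "\<bar>De h\<bar> \<le> (\<Sum>k\<in>UNIV. \<bar>h$k\<bar> * \<bar>De (axis k 1)\<bar>)"
      by (simp add: sum_abs[THEN order_trans] abs_mult)
    also have "\<dots> \<le> (\<Sum>k\<in>UNIV. \<bar>h$k\<bar> * b3 SE)"
      by (intro sum_mono mult_left_mono gr) auto
    finally show ?thesis by (simp add: sum_distrib_left mult.commute)
  qed
  have "((\<lambda>t. t*C) \<longlongrightarrow> 0*C) (at_right (0::real))"
    by (intro tendsto_intros)
  hence "eventually (\<lambda>t. t*C < d) (at_right (0::real))"
    using dp by (auto dest: order_tendstoD(2))
  with ev show ?thesis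
  proof eventually_elim
    case (elim t)
    let ?h = "to_outvec (u' t) - ?a"
    have s: "(\<Sum>k\<in>UNIV. \<bar>?h$k\<bar>) \<le> t*C" using elim sum_outvec[of "u' t" u, where 'o='o] by simp
    have nh: "norm ?h < d" using norm_le_l1_cart[of ?h] s elim by linarith
    have "e (to_outvec (u' t)) y - e ?a y \<le> \<bar>De ?h\<bar> + norm ?h"
      using dd nh by (smt (verit) real_norm_def)
    also have "\<dots> \<le> b3 SE * (t*C) + t*C"
    proof -
      have "b3 SE \<ge> 0" using gr[of undefined] by linarith
      hence "b3 SE * (\<Sum>k\<in>UNIV. \<bar>?h$k\<bar>) \<le> b3 SE * (t*C)" using s by (intro mult_left_mono)
      thus ?thesis using Dh[of ?h] norm_le_l1_cart[of ?h] s by linarith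
    qed
    finally show ?case by (simp add: algebra_simps)
  qed
qed

definition pre :: "(nat \<Rightarrow> real \<Rightarrow> real) \<Rightarrow> (nat \<Rightarrow> nat) \<Rightarrow> (nat \<Rightarrow> nat \<Rightarrow> nat \<Rightarrow> real)
    \<Rightarrow> (nat \<Rightarrow> real) \<Rightarrow> nat \<Rightarrow> nat \<Rightarrow> real" where
  "pre \<sigma> d W x m k = (\<Sum>i<d m. fwd \<sigma> d W x m i * W (Suc m) i k)"

lemma fwd_Suc_pre: "fwd \<sigma> d W x (Suc m) k = \<sigma> (Suc m) (pre \<sigma> d W x m k)"
  by (simp add: pre_def)

declare fwd.simps(2)[simp del]

fun Abd :: "(nat \<Rightarrow> real \<Rightarrow> real) \<Rightarrow> real \<Rightarrow> real \<Rightarrow> nat \<Rightarrow> real" where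
  "Abd b1 X0 R 0 = X0"
| "Abd b1 X0 R (Suc m) = b1 (Suc m) (Abd b1 X0 R m * R) * (Abd b1 X0 R m * R)"

lemma Abd_nonneg:
  assumes "\<forall>l\<in>{1..L}. \<forall>S\<ge>0. b1 l S \<ge> 0" "X0 \<ge> 0" "R \<ge> 0"
  shows "m \<le> L \<Longrightarrow> Abd b1 X0 R m \<ge> 0"
proof (induction m)
  case (Suc m)
  hence "Abd b1 X0 R m * R \<ge> 0" using assms by simp
  moreover have "b1 (Suc m) (Abd b1 X0 R m * R) \<ge> 0" using assms(1) Suc calculation by auto
  ultimately show ?case by simp
qed (use assms in simp)

lemma pre_bound_inf:
  assumes A: "\<forall>i<d m. \<bar>fwd \<sigma> d W x m i\<bar> \<le> A" and Ann: "A \<ge> 0"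
    and H: "(\<Sum>i<d m. \<bar>W (Suc m) i k\<bar>) \<le> R"
  shows "\<bar>pre \<sigma> d W x m k\<bar> \<le> A * R"
proof -
  have "\<bar>pre \<sigma> d W x m k\<bar> \<le> (\<Sum>i<d m. \<bar>fwd \<sigma> d W x m i\<bar> * \<bar>W (Suc m) i k\<bar>)"
    unfolding pre_def by (rule order_trans[OF sum_abs]) (simp add: abs_mult)
  also have "\<dots> \<le> (\<Sum>i<d m. A * \<bar>W (Suc m) i k\<bar>)"
    using A by (intro sum_mono mult_right_mono) auto
  also have "\<dots> = A * (\<Sum>i<d m. \<bar>W (Suc m) i k\<bar>)" by (simp add: sum_distrib_left)
  also have "\<dots> \<le> A * R" using H Ann by (intro mult_left_mono)
  finally show ?thesis .
qed

lemma act_inf: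
  assumes hb1: "\<forall>l\<in>{1..L}. \<forall>S s. \<bar>s\<bar> \<le> S \<longrightarrow> \<bar>\<sigma> l s\<bar> \<le> b1 l S * \<bar>s\<bar>"
    and b1nn: "\<forall>l\<in>{1..L}. \<forall>S\<ge>0. b1 l S \<ge> 0" and X0: "X0 \<ge> 0" and R: "R \<ge> 0"
    and H: "\<forall>m\<in>{1..L}. \<forall>k<d m. (\<Sum>i<d (m-1). \<bar>W m i k\<bar>) \<le> R"
    and x: "\<forall>i<d 0. \<bar>x i\<bar> \<le> X0"
  shows "m \<le> L \<Longrightarrow> \<forall>k<d m. \<bar>fwd \<sigma> d W x m k\<bar> \<le> Abd b1 X0 R m"
proof (induction m)
  case 0 then show ?case using x by simp
next
  case (Suc m)
  have An: "Abd b1 X0 R m \<ge> 0" using Abd_nonneg[OF b1nn X0 R] Suc by simp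
  show ?case
  proof (intro allI impI)
    fix k assume k: "k < d (Suc m)"
    have pb: "\<bar>pre \<sigma> d W x m k\<bar> \<le> Abd b1 X0 R m * R"
    proof (rule pre_bound_inf)
      show "(\<Sum>i<d m. \<bar>W (Suc m) i k\<bar>) \<le> R" using H[rule_format, of "Suc m" k] Suc.prems k by simp
    qed (use Suc An in auto)
    have "\<bar>fwd \<sigma> d W x (Suc m) k\<bar> \<le> b1 (Suc m) (Abd b1 X0 R m * R) * \<bar>pre \<sigma> d W x m k\<bar>"
      using hb1[rule_format, of "Suc m" "pre \<sigma> d W x m k" "Abd b1 X0 R m * R"] Suc.prems pb by (simp add: fwd_Suc_pre)
    also have "\<dots> \<le> b1 (Suc m) (Abd b1 X0 R m * R) * (Abd b1 X0 R m * R)"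
      using pb b1nn Suc.prems An R by (intro mult_left_mono) auto
    finally show "\<bar>fwd \<sigma> d W x (Suc m) k\<bar> \<le> Abd b1 X0 R (Suc m)" by simp
  qed
qed

lemma pre_bound_1:
  assumes A: "(\<Sum>i<d m. \<bar>fwd \<sigma> d W x m i\<bar>) \<le> A"
    and H: "\<forall>i<d m. (\<Sum>k<d (Suc m). \<bar>W (Suc m) i k\<bar>) \<le> R" and R: "R \<ge> 0"
  shows "(\<Sum>k<d (Suc m). \<bar>pre \<sigma> d W x m k\<bar>) \<le> A * R"
proof -
  have "(\<Sum>k<d (Suc m). \<bar>pre \<sigma> d W x m k\<bar>) \<le> (\<Sum>k<d (Suc m). \<Sum>i<d m. \<bar>fwd \<sigma> d W x m i\<bar> * \<bar>W (Suc m) i k\<bar>)"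
    unfolding pre_def by (intro sum_mono, rule order_trans[OF sum_abs]) (simp add: abs_mult)
  also have "\<dots> = (\<Sum>i<d m. \<bar>fwd \<sigma> d W x m i\<bar> * (\<Sum>k<d (Suc m). \<bar>W (Suc m) i k\<bar>))"
    by (subst sum.swap) (simp add: sum_distrib_left)
  also have "\<dots> \<le> (\<Sum>i<d m. \<bar>fwd \<sigma> d W x m i\<bar> * R)"
    using H by (intro sum_mono mult_left_mono) auto
  also have "\<dots> \<le> A * R" using A R by (simp add: sum_distrib_right[symmetric] mult_right_mono)
  finally show ?thesis .
qed

lemma act_1:
  assumes hb1: "\<forall>l\<in>{1..L}. \<forall>S s. \<bar>s\<bar> \<le> S \<longrightarrow> \<bar>\<sigma> l s\<bar> \<le> b1 l S * \<bar>s\<bar>"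
    and b1nn: "\<forall>l\<in>{1..L}. \<forall>S\<ge>0. b1 l S \<ge> 0" and X0: "X0 \<ge> 0" and R: "R \<ge> 0"
    and H: "\<forall>m\<in>{1..L}. \<forall>i<d (m-1). (\<Sum>k<d m. \<bar>W m i k\<bar>) \<le> R"
    and x: "(\<Sum>i<d 0. \<bar>x i\<bar>) \<le> X0"
  shows "m \<le> L \<Longrightarrow> (\<Sum>k<d m. \<bar>fwd \<sigma> d W x m k\<bar>) \<le> Abd b1 X0 R m"
proof (induction m)
  case 0 then show ?case using x by simp
next
  case (Suc m)
  have An: "Abd b1 X0 R m \<ge> 0" using Abd_nonneg[OF b1nn X0 R] Suc by simp
  have pb: "(\<Sum>k<d (Suc m). \<bar>pre \<sigma> d W x m k\<bar>) \<le> Abd b1 X0 R m * R"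
  proof (rule pre_bound_1)
    show "\<forall>i<d m. (\<Sum>k<d (Suc m). \<bar>W (Suc m) i k\<bar>) \<le> R" using H Suc.prems by auto
  qed (use Suc R in auto)
  have pk: "\<bar>pre \<sigma> d W x m k\<bar> \<le> Abd b1 X0 R m * R" if "k < d (Suc m)" for k
    using pb member_le_sum[of k "{..<d (Suc m)}" "\<lambda>k. \<bar>pre \<sigma> d W x m k\<bar>"] that by auto
  have "(\<Sum>k<d (Suc m). \<bar>fwd \<sigma> d W x (Suc m) k\<bar>) \<le> (\<Sum>k<d (Suc m). b1 (Suc m) (Abd b1 X0 R m * R) * \<bar>pre \<sigma> d W x m k\<bar>)"
    using hb1[rule_format, of "Suc m" _ "Abd b1 X0 R m * R"] Suc.prems pk by (intro sum_mono) (simp add: fwd_Suc_pre)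
  also have "\<dots> = b1 (Suc m) (Abd b1 X0 R m * R) * (\<Sum>k<d (Suc m). \<bar>pre \<sigma> d W x m k\<bar>)"
    by (simp add: sum_distrib_left)
  also have "\<dots> \<le> b1 (Suc m) (Abd b1 X0 R m * R) * (Abd b1 X0 R m * R)"
    using pb b1nn Suc.prems An R by (intro mult_left_mono) auto
  finally show ?case by simp
qed

fun Gam :: "(nat \<Rightarrow> real) \<Rightarrow> nat \<Rightarrow> nat \<Rightarrow> real" where
  "Gam F a 0 = 1"
| "Gam F a (Suc q) = Gam F a q * F (Suc (a+q))"

lemma Gam_nonneg: "\<forall>m. F m \<ge> 0 \<Longrightarrow> Gam F a q \<ge> 0"
  by (induction q) auto

lemma down_inf:
  fixes W' :: "real \<Rightarrow> nat \<Rightarrow> nat \<Rightarrow> nat \<Rightarrow> real"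
  assumes agree: "\<forall>t m. a < m \<longrightarrow> m \<le> L \<longrightarrow> W' t m = W m"
    and base: "eventually (\<lambda>t. \<forall>k<d a. \<bar>fwd \<sigma> d (W' t) x a k - fwd \<sigma> d W x a k\<bar> \<le> t*C) (at_right 0)"
    and C: "C \<ge> 0" and R: "R \<ge> 0" and K: "\<forall>m. K m \<ge> 0"
    and H: "\<forall>m. a < m \<longrightarrow> m \<le> L \<longrightarrow> (\<forall>k<d m. (\<Sum>i<d (m-1). \<bar>W m i k\<bar>) \<le> R)"
    and sigl: "\<forall>m. a < m \<longrightarrow> m \<le> L \<longrightarrow> (\<forall>k<d m. \<exists>\<delta>>0. \<forall>h. \<bar>h\<bar> < \<delta> \<longrightarrow>
        \<bar>\<sigma> m (pre \<sigma> d W x (m-1) k + h) - \<sigma> m (pre \<sigma> d W x (m-1) k)\<bar> \<le> K m * \<bar>h\<bar>)"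
  shows "a+q \<le> L \<Longrightarrow> eventually (\<lambda>t. \<forall>k<d (a+q). \<bar>fwd \<sigma> d (W' t) x (a+q) k - fwd \<sigma> d W x (a+q) k\<bar>
            \<le> t*(C*Gam (\<lambda>m. K m * R) a q)) (at_right 0)"
proof (induction q)
  case 0 then show ?case using base by simp
next
  case (Suc q)
  let ?m = "Suc (a+q)"
  let ?G = "Gam (\<lambda>m. K m * R) a q"
  have G: "?G \<ge> 0" using K R by (intro Gam_nonneg) auto
  have IH: "eventually (\<lambda>t. \<forall>i<d (a+q). \<bar>fwd \<sigma> d (W' t) x (a+q) i - fwd \<sigma> d W x (a+q) i\<bar>
            \<le> t*(C*?G)) (at_right 0)" using Suc by simp
  have W'm: "W' t ?m = W ?m" for t using agree Suc.prems by simp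
  define h where "h k t = pre \<sigma> d (W' t) x (a+q) k - pre \<sigma> d W x (a+q) k" for k t
  have hk: "h k t = (\<Sum>i<d (a+q). (fwd \<sigma> d (W' t) x (a+q) i - fwd \<sigma> d W x (a+q) i) * W ?m i k)" for k t
    unfolding h_def pre_def W'm by (simp add: sum_subtractf left_diff_distrib)
  have "\<forall>k\<in>{..<d ?m}. eventually (\<lambda>t. \<bar>fwd \<sigma> d (W' t) x ?m k - fwd \<sigma> d W x ?m k\<bar>
            \<le> t*(C*(?G * (K ?m * R)))) (at_right 0)"
  proof
    fix k assume k: "k \<in> {..<d ?m}"
    have Hk: "(\<Sum>i<d (a+q). \<bar>W ?m i k\<bar>) \<le> R" using H[rule_format, of ?m k] Suc.prems k by auto
    have evh: "eventually (\<lambda>t. \<bar>h k t\<bar> \<le> t*(C*?G*R)) (at_right 0)"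
      using IH eventually_at_right_less[of "0::real"]
    proof eventually_elim
      case (elim t)
      have "\<bar>h k t\<bar> \<le> (\<Sum>i<d (a+q). \<bar>fwd \<sigma> d (W' t) x (a+q) i - fwd \<sigma> d W x (a+q) i\<bar> * \<bar>W ?m i k\<bar>)"
        unfolding hk by (rule order_trans[OF sum_abs]) (simp add: abs_mult)
      also have "\<dots> \<le> (\<Sum>i<d (a+q). t*(C*?G) * \<bar>W ?m i k\<bar>)"
        using elim by (intro sum_mono mult_right_mono) auto
      also have "\<dots> = t*(C*?G) * (\<Sum>i<d (a+q). \<bar>W ?m i k\<bar>)" by (simp add: sum_distrib_left)
      also have "\<dots> \<le> t*(C*?G) * R"
        using Hk elim C G by (intro mult_left_mono) auto
      finally show ?case by (simp add: mult.assoc)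
    qed
    have sl: "\<exists>\<delta>>0. \<forall>hh. \<bar>hh\<bar> < \<delta> \<longrightarrow>
        \<bar>\<sigma> ?m (pre \<sigma> d W x (a+q) k + hh) - \<sigma> ?m (pre \<sigma> d W x (a+q) k)\<bar> \<le> K ?m * \<bar>hh\<bar>"
      using sigl[rule_format, of ?m k] Suc.prems k by auto
    show "eventually (\<lambda>t. \<bar>fwd \<sigma> d (W' t) x ?m k - fwd \<sigma> d W x ?m k\<bar>
            \<le> t*(C*(?G * (K ?m * R)))) (at_right 0)"
      using sig_ev[OF sl evh] evh
    proof eventually_elim
      case (elim t)
      have "fwd \<sigma> d (W' t) x ?m k = \<sigma> ?m (pre \<sigma> d W x (a+q) k + h k t)"
        by (simp add: fwd_Suc_pre h_def)
      hence "\<bar>fwd \<sigma> d (W' t) x ?m k - fwd \<sigma> d W x ?m k\<bar> \<le> K ?m * \<bar>h k t\<bar>"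
        using elim by (simp add: fwd_Suc_pre)
      also have "\<dots> \<le> K ?m * (t*(C*?G*R))" using elim K by (intro mult_left_mono) auto
      finally show ?case by (simp add: algebra_simps)
    qed
  qed
  hence "eventually (\<lambda>t. \<forall>k\<in>{..<d ?m}. \<bar>fwd \<sigma> d (W' t) x ?m k - fwd \<sigma> d W x ?m k\<bar>
            \<le> t*(C*(?G * (K ?m * R)))) (at_right 0)"
    by (intro eventually_ball_finite) auto
  thus ?case by (auto elim!: eventually_mono)
qed

lemma down_1:
  fixes W' :: "real \<Rightarrow> nat \<Rightarrow> nat \<Rightarrow> nat \<Rightarrow> real"
  assumes agree: "\<forall>t m. a < m \<longrightarrow> m \<le> L \<longrightarrow> W' t m = W m"
    and base: "eventually (\<lambda>t. (\<Sum>k<d a. \<bar>fwd \<sigma> d (W' t) x a k - fwd \<sigma> d W x a k\<bar>) \<le> t*C) (at_right 0)"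
    and C: "C \<ge> 0" and R: "R \<ge> 0" and K: "\<forall>m. K m \<ge> 0"
    and H: "\<forall>m. a < m \<longrightarrow> m \<le> L \<longrightarrow> (\<forall>i<d (m-1). (\<Sum>k<d m. \<bar>W m i k\<bar>) \<le> R)"
    and sigl: "\<forall>m. a < m \<longrightarrow> m \<le> L \<longrightarrow> (\<forall>k<d m. \<exists>\<delta>>0. \<forall>h. \<bar>h\<bar> < \<delta> \<longrightarrow>
        \<bar>\<sigma> m (pre \<sigma> d W x (m-1) k + h) - \<sigma> m (pre \<sigma> d W x (m-1) k)\<bar> \<le> K m * \<bar>h\<bar>)"
  shows "a+q \<le> L \<Longrightarrow> eventually (\<lambda>t. (\<Sum>k<d (a+q). \<bar>fwd \<sigma> d (W' t) x (a+q) k - fwd \<sigma> d W x (a+q) k\<bar>)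
            \<le> t*(C*Gam (\<lambda>m. K m * R) a q)) (at_right 0)"
proof (induction q)
  case 0 then show ?case using base by simp
next
  case (Suc q)
  let ?m = "Suc (a+q)"
  let ?G = "Gam (\<lambda>m. K m * R) a q"
  have G: "?G \<ge> 0" using K R by (intro Gam_nonneg) auto
  have IH: "eventually (\<lambda>t. (\<Sum>i<d (a+q). \<bar>fwd \<sigma> d (W' t) x (a+q) i - fwd \<sigma> d W x (a+q) i\<bar>)
            \<le> t*(C*?G)) (at_right 0)" using Suc by simp
  have W'm: "W' t ?m = W ?m" for t using agree Suc.prems by simp
  define h where "h k t = pre \<sigma> d (W' t) x (a+q) k - pre \<sigma> d W x (a+q) k" for k t
  have hk: "h k t = (\<Sum>i<d (a+q). (fwd \<sigma> d (W' t) x (a+q) i - fwd \<sigma> d W x (a+q) i) * W ?m i k)" for k t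
    unfolding h_def pre_def W'm by (simp add: sum_subtractf left_diff_distrib)
  have Hi: "\<forall>i<d (a+q). (\<Sum>k<d ?m. \<bar>W ?m i k\<bar>) \<le> R" using H Suc.prems by auto
  have evA: "eventually (\<lambda>t. (\<Sum>k<d ?m. \<bar>h k t\<bar>) \<le> t*(C*?G*R)) (at_right 0)"
    using IH eventually_at_right_less[of "0::real"]
  proof eventually_elim
    case (elim t)
    let ?D = "\<lambda>i. \<bar>fwd \<sigma> d (W' t) x (a+q) i - fwd \<sigma> d W x (a+q) i\<bar>"
    have "(\<Sum>k<d ?m. \<bar>h k t\<bar>) \<le> (\<Sum>k<d ?m. \<Sum>i<d (a+q). ?D i * \<bar>W ?m i k\<bar>)"
      unfolding hk by (intro sum_mono, rule order_trans[OF sum_abs]) (simp add: abs_mult)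
    also have "\<dots> = (\<Sum>i<d (a+q). ?D i * (\<Sum>k<d ?m. \<bar>W ?m i k\<bar>))"
      by (subst sum.swap) (simp add: sum_distrib_left)
    also have "\<dots> \<le> (\<Sum>i<d (a+q). ?D i * R)"
      using Hi by (intro sum_mono mult_left_mono) auto
    also have "\<dots> = (\<Sum>i<d (a+q). ?D i) * R" by (simp add: sum_distrib_right)
    also have "\<dots> \<le> t*(C*?G) * R" using elim R by (intro mult_right_mono) auto
    finally show ?case by (simp add: mult.assoc)
  qed
  have "\<forall>k\<in>{..<d ?m}. eventually (\<lambda>t. \<bar>fwd \<sigma> d (W' t) x ?m k - fwd \<sigma> d W x ?m k\<bar>
            \<le> K ?m * \<bar>h k t\<bar>) (at_right 0)"
  proof
    fix k assume k: "k \<in> {..<d ?m}"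
    have evh: "eventually (\<lambda>t. \<bar>h k t\<bar> \<le> t*(C*?G*R)) (at_right 0)"
      using evA
    proof eventually_elim
      case (elim t)
      have "\<bar>h k t\<bar> \<le> (\<Sum>k<d ?m. \<bar>h k t\<bar>)"
        using k by (intro member_le_sum) auto
      thus ?case using elim by linarith
    qed
    have sl: "\<exists>\<delta>>0. \<forall>hh. \<bar>hh\<bar> < \<delta> \<longrightarrow>
        \<bar>\<sigma> ?m (pre \<sigma> d W x (a+q) k + hh) - \<sigma> ?m (pre \<sigma> d W x (a+q) k)\<bar> \<le> K ?m * \<bar>hh\<bar>"
      using sigl[rule_format, of ?m k] Suc.prems k by auto
    show "eventually (\<lambda>t. \<bar>fwd \<sigma> d (W' t) x ?m k - fwd \<sigma> d W x ?m k\<bar>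
            \<le> K ?m * \<bar>h k t\<bar>) (at_right 0)"
      using sig_ev[OF sl evh]
    proof eventually_elim
      case (elim t)
      have "fwd \<sigma> d (W' t) x ?m k = \<sigma> ?m (pre \<sigma> d W x (a+q) k + h k t)"
        by (simp add: fwd_Suc_pre h_def)
      thus ?case using elim by (simp add: fwd_Suc_pre)
    qed
  qed
  hence "eventually (\<lambda>t. \<forall>k\<in>{..<d ?m}. \<bar>fwd \<sigma> d (W' t) x ?m k - fwd \<sigma> d W x ?m k\<bar>
            \<le> K ?m * \<bar>h k t\<bar>) (at_right 0)"
    by (intro eventually_ball_finite) auto
  with evA have "eventually (\<lambda>t. (\<Sum>k<d ?m. \<bar>fwd \<sigma> d (W' t) x ?m k - fwd \<sigma> d W x ?m k\<bar>)
            \<le> t*(C*(?G * (K ?m * R)))) (at_right 0)"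
  proof eventually_elim
    case (elim t)
    have "(\<Sum>k<d ?m. \<bar>fwd \<sigma> d (W' t) x ?m k - fwd \<sigma> d W x ?m k\<bar>) \<le> (\<Sum>k<d ?m. K ?m * \<bar>h k t\<bar>)"
      using elim by (intro sum_mono) auto
    also have "\<dots> = K ?m * (\<Sum>k<d ?m. \<bar>h k t\<bar>)" by (simp add: sum_distrib_left)
    also have "\<dots> \<le> K ?m * (t*(C*?G*R))" using elim K by (intro mult_left_mono) auto
    finally show ?case by (simp add: algebra_simps)
  qed
  thus ?case by simp
qed

lemma pnorm_scale:
  fixes a :: "'a \<Rightarrow> real"
  assumes "0 \<le> c" "p > 0"
  shows "(\<Sum>j\<in>J. \<bar>c * a j\<bar> powr p) powr (1/p) = c * (\<Sum>j\<in>J. \<bar>a j\<bar> powr p) powr (1/p)"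
proof -
  have "(\<Sum>j\<in>J. \<bar>c * a j\<bar> powr p) = c powr p * (\<Sum>j\<in>J. \<bar>a j\<bar> powr p)"
    using assms by (simp add: abs_mult powr_mult sum_distrib_left)
  hence "(\<Sum>j\<in>J. \<bar>c * a j\<bar> powr p) powr (1/p) = (c powr p) powr (1/p) * (\<Sum>j\<in>J. \<bar>a j\<bar> powr p) powr (1/p)"
    by (simp add: powr_mult sum_nonneg)
  also have "(c powr p) powr (1/p) = c" using assms by (cases "c = 0") (auto simp: powr_powr)
  finally show ?thesis .
qed

lemma fwd_cong: "(\<forall>m. 1 \<le> m \<longrightarrow> m \<le> n \<longrightarrow> W' m = W m) \<Longrightarrow> fwd \<sigma> d W' x n = fwd \<sigma> d W x n"
proof (induction n)
  case (Suc n)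
  hence "fwd \<sigma> d W' x n = fwd \<sigma> d W x n" by simp
  moreover have "W' (Suc n) = W (Suc n)" using Suc.prems by simp
  ultimately show ?case by (simp add: fun_eq_iff fwd_Suc_pre pre_def)
qed simp

lemma sig_loc2:
  fixes \<sigma> :: "nat \<Rightarrow> real \<Rightarrow> real"
  assumes sig_left: "\<forall>l\<in>{1..L}. \<forall>s. \<exists>Dl. (\<sigma> l has_real_derivative Dl) (at_left s)"
    and sig_right: "\<forall>l\<in>{1..L}. \<forall>s. \<exists>Dr. (\<sigma> l has_real_derivative Dr) (at_right s)"
    and sig_b2_left: "\<forall>l\<in>{1..L}. \<forall>S s Dl. \<bar>s\<bar> \<le> S \<longrightarrow>
         (\<sigma> l has_real_derivative Dl) (at_left s) \<longrightarrow> \<bar>Dl\<bar> \<le> b2 l S"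
    and sig_b2_right: "\<forall>l\<in>{1..L}. \<forall>S s Dr. \<bar>s\<bar> \<le> S \<longrightarrow>
         (\<sigma> l has_real_derivative Dr) (at_right s) \<longrightarrow> \<bar>Dr\<bar> \<le> b2 l S"
  shows "\<forall>m\<in>{1..L}. \<forall>S z. \<bar>z\<bar> \<le> S \<longrightarrow> (\<exists>\<delta>>0. \<forall>h. \<bar>h\<bar> < \<delta> \<longrightarrow> \<bar>\<sigma> m (z+h) - \<sigma> m z\<bar> \<le> (\<bar>b2 m S\<bar> + 1)*\<bar>h\<bar>)"
proof (intro ballI allI impI)
  fix m :: nat and S z :: real assume m: "m \<in> {1..L}" and z: "\<bar>z\<bar> \<le> S"
  obtain Dl where Dl: "(\<sigma> m has_real_derivative Dl) (at_left z)" using sig_left m by blast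
  obtain Dr where Dr: "(\<sigma> m has_real_derivative Dr) (at_right z)" using sig_right m by blast
  have "\<bar>Dl\<bar> \<le> \<bar>b2 m S\<bar>" using sig_b2_left m z Dl by force
  moreover have "\<bar>Dr\<bar> \<le> \<bar>b2 m S\<bar>" using sig_b2_right m z Dr by force
  ultimately show "\<exists>\<delta>>0. \<forall>h. \<bar>h\<bar> < \<delta> \<longrightarrow> \<bar>\<sigma> m (z+h) - \<sigma> m z\<bar> \<le> (\<bar>b2 m S\<bar> + 1)*\<bar>h\<bar>"
    using sig_loc[OF Dl Dr] by blast
qed

lemma unit_out:
  fixes \<sigma> :: "nat \<Rightarrow> real \<Rightarrow> real" and e :: "real^'o::finite \<Rightarrow> 'y \<Rightarrow> real"
    and D :: "((nat \<Rightarrow> real) \<times> 'y) set"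
  assumes finD: "finite D"
    and SL: "\<forall>m\<in>{1..L}. \<forall>S z. \<bar>z\<bar> \<le> S \<longrightarrow> (\<exists>\<delta>>0. \<forall>h. \<bar>h\<bar> < \<delta> \<longrightarrow> \<bar>\<sigma> m (z+h) - \<sigma> m z\<bar> \<le> (\<bar>b2 m S\<bar> + 1)*\<bar>h\<bar>)"
    and hb1: "\<forall>l\<in>{1..L}. \<forall>S s. \<bar>s\<bar> \<le> S \<longrightarrow> \<bar>\<sigma> l s\<bar> \<le> b1 l S * \<bar>s\<bar>"
    and b1nn: "\<forall>l\<in>{1..L}. \<forall>S\<ge>0. b1 l S \<ge> 0"
    and e_diff: "\<forall>v y. (\<lambda>w. e w y) differentiable (at v)"
    and e_grad: "\<forall>S v y De. e v y \<le> S \<longrightarrow> ((\<lambda>w. e w y) has_derivative De) (at v) \<longrightarrow>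
         (\<forall>k. \<bar>De (axis k 1)\<bar> \<le> b3 S)"
    and lam: "lam > 0" and p: "p > 0"
    and X0: "X0 \<ge> 0" and X0D: "\<forall>xy\<in>D. \<forall>i<d 0. \<bar>fst xy i\<bar> \<le> X0"
    and R: "R \<ge> 0"
    and H: "\<forall>m\<in>{1..L}. \<forall>k<d m. (\<Sum>i<d (m-1). \<bar>W m i k\<bar>) \<le> R"
    and eb: "\<forall>xy\<in>D. e (net \<sigma> L d W (fst xy)) (snd xy) \<le> SE"
    and dL: "d L = CARD('o)"
    and lm: "is_local_min (energy \<sigma> e D (Omega_out lam p L) L) L d W"
    and l: "1 \<le> l" "l < L" and j: "j < d l"
    and v: "k0 < d (Suc l)" "W (Suc l) j k0 \<noteq> 0"
  shows "card D > 0 \<and> lam * real (card D) \<le> (b3 SE + 1) * real CARD('o) * (\<bar>b2 (Suc l) (Abd b1 X0 R l * R)\<bar> + 1)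
      * Gam (\<lambda>m. (\<bar>b2 m (Abd b1 X0 R (m-1) * R)\<bar> + 1) * R) (Suc l) (L - Suc l)
      * (\<Sum>xy\<in>D. \<bar>fwd \<sigma> d W (fst xy) l j\<bar>)"
proof -
  define A where "A = Abd b1 X0 R"
  define K where "K m = \<bar>b2 m (A (m-1) * R)\<bar> + 1" for m
  define G where "G = Gam (\<lambda>m. K m * R) (Suc l) (L - Suc l)"
  define P where "P = (\<Sum>k<d (Suc l). \<bar>W (Suc l) j k\<bar> powr p) powr (1/p)"
  define W' where "W' t = W(Suc l := (\<lambda>i k. if i = j then (1-t) * W (Suc l) i k else W (Suc l) i k))" for t :: real
  define E where "E = energy \<sigma> e D (Omega_out lam p L) L"
  have Knn: "\<forall>m. K m \<ge> 0" unfolding K_def by simp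
  have Gnn: "G \<ge> 0" unfolding G_def using Knn R by (intro Gam_nonneg) auto
  have Pk: "\<bar>W (Suc l) j k\<bar> \<le> P" if "k < d (Suc l)" for k
    unfolding P_def using that p by (intro entry_le_pnorm) auto
  have Ppos: "P > 0" using Pk[OF v(1)] v(2) by simp
  have Ann: "A m \<ge> 0" if "m \<le> L" for m unfolding A_def using Abd_nonneg[OF b1nn X0 R] that by blast
  have act: "\<forall>k<d m. \<bar>fwd \<sigma> d W (fst xy) m k\<bar> \<le> A m" if "xy \<in> D" "m \<le> L" for xy m
    unfolding A_def using act_inf[OF hb1 b1nn X0 R H] X0D that by blast
  have preb: "\<bar>pre \<sigma> d W (fst xy) m k\<bar> \<le> A m * R" if "xy \<in> D" "m < L" "k < d (Suc m)" for xy m k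
  proof (rule pre_bound_inf)
    show "\<forall>i<d m. \<bar>fwd \<sigma> d W (fst xy) m i\<bar> \<le> A m" using act that by simp
    show "(\<Sum>i<d m. \<bar>W (Suc m) i k\<bar>) \<le> R" using H[rule_format, of "Suc m" k] that by simp
  qed (use Ann that in simp)
  have fw_same: "fwd \<sigma> d (W' t) x l = fwd \<sigma> d W x l" for t x
    by (rule fwd_cong) (simp add: W'_def)
  have pre': "pre \<sigma> d (W' t) x l k = pre \<sigma> d W x l k + (- t * fwd \<sigma> d W x l j * W (Suc l) j k)" for t x k
  proof -
    have "pre \<sigma> d (W' t) x l k = (\<Sum>i<d l. fwd \<sigma> d W x l i * W (Suc l) i k - (if i = j then t * fwd \<sigma> d W x l i * W (Suc l) i k else 0))"
      unfolding pre_def fw_same by (intro sum.cong) (auto simp: W'_def algebra_simps)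
    also have "\<dots> = pre \<sigma> d W x l k - t * fwd \<sigma> d W x l j * W (Suc l) j k"
      using j by (simp add: sum_subtractf pre_def)
    finally show ?thesis by simp
  qed
  have agree: "\<forall>t m. Suc l < m \<longrightarrow> m \<le> L \<longrightarrow> W' t m = W m" by (simp add: W'_def)
  have sigl: "\<forall>m. Suc l < m \<longrightarrow> m \<le> L \<longrightarrow> (\<forall>k<d m. \<exists>\<delta>>0. \<forall>h. \<bar>h\<bar> < \<delta> \<longrightarrow>
        \<bar>\<sigma> m (pre \<sigma> d W (fst xy) (m-1) k + h) - \<sigma> m (pre \<sigma> d W (fst xy) (m-1) k)\<bar> \<le> K m * \<bar>h\<bar>)"
    if xy: "xy \<in> D" for xy
  proof (intro allI impI)
    fix m k assume m: "Suc l < m" "m \<le> L" and k: "k < d m"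
    obtain m' where m': "m = Suc m'" using m by (cases m) auto
    have "\<bar>pre \<sigma> d W (fst xy) (m-1) k\<bar> \<le> A (m-1) * R" using preb[OF xy, of m' k] m m' k by simp
    thus "\<exists>\<delta>>0. \<forall>h. \<bar>h\<bar> < \<delta> \<longrightarrow>
        \<bar>\<sigma> m (pre \<sigma> d W (fst xy) (m-1) k + h) - \<sigma> m (pre \<sigma> d W (fst xy) (m-1) k)\<bar> \<le> K m * \<bar>h\<bar>"
      using SL m unfolding K_def by auto
  qed
  define c where "c xy = K (Suc l) * \<bar>fwd \<sigma> d W (fst xy) l j\<bar> * P" for xy :: "(nat \<Rightarrow> real) \<times> 'y"
  have cnn: "c xy \<ge> 0" for xy unfolding c_def using Knn Ppos by simp
  have evx: "eventually (\<lambda>t. e (net \<sigma> L d (W' t) (fst xy)) (snd xy) - e (net \<sigma> L d W (fst xy)) (snd xy)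
      \<le> (b3 SE + 1) * (t * (real CARD('o) * (c xy * G)))) (at_right 0)" if xy: "xy \<in> D" for xy
  proof -
    let ?x = "fst xy"
    have "\<forall>k\<in>{..<d (Suc l)}. eventually (\<lambda>t. \<bar>fwd \<sigma> d (W' t) ?x (Suc l) k - fwd \<sigma> d W ?x (Suc l) k\<bar> \<le> t * c xy) (at_right 0)"
    proof
      fix k assume k: "k \<in> {..<d (Suc l)}"
      let ?g = "\<lambda>t. - t * fwd \<sigma> d W ?x l j * W (Suc l) j k"
      have evg: "eventually (\<lambda>t. \<bar>?g t\<bar> \<le> t * (\<bar>fwd \<sigma> d W ?x l j\<bar> * P)) (at_right 0)"
        using eventually_at_right_less[of "0::real"]
      proof eventually_elim
        case (elim t)
        have "\<bar>?g t\<bar> = t * (\<bar>fwd \<sigma> d W ?x l j\<bar> * \<bar>W (Suc l) j k\<bar>)" using elim by (simp add: abs_mult)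
        also have "\<dots> \<le> t * (\<bar>fwd \<sigma> d W ?x l j\<bar> * P)" using elim Pk k by (intro mult_left_mono) auto
        finally show ?case .
      qed
      have sl: "\<exists>\<delta>>0. \<forall>h. \<bar>h\<bar> < \<delta> \<longrightarrow> \<bar>\<sigma> (Suc l) (pre \<sigma> d W ?x l k + h) - \<sigma> (Suc l) (pre \<sigma> d W ?x l k)\<bar> \<le> K (Suc l) * \<bar>h\<bar>"
        using SL preb[OF xy, of l k] l k unfolding K_def by auto
      show "eventually (\<lambda>t. \<bar>fwd \<sigma> d (W' t) ?x (Suc l) k - fwd \<sigma> d W ?x (Suc l) k\<bar> \<le> t * c xy) (at_right 0)"
        using sig_ev[OF sl evg] evg eventually_at_right_less[of "0::real"]
      proof eventually_elim
        case (elim t)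
        have "\<bar>fwd \<sigma> d (W' t) ?x (Suc l) k - fwd \<sigma> d W ?x (Suc l) k\<bar> \<le> K (Suc l) * \<bar>?g t\<bar>"
          using elim(1) by (simp add: fwd_Suc_pre pre')
        also have "\<dots> \<le> K (Suc l) * (t * (\<bar>fwd \<sigma> d W ?x l j\<bar> * P))" using elim Knn by (intro mult_left_mono) auto
        finally show ?case by (simp add: c_def algebra_simps)
      qed
    qed
    hence "eventually (\<lambda>t. \<forall>k\<in>{..<d (Suc l)}. \<bar>fwd \<sigma> d (W' t) ?x (Suc l) k - fwd \<sigma> d W ?x (Suc l) k\<bar> \<le> t * c xy) (at_right 0)"
      by (intro eventually_ball_finite) auto
    hence base: "eventually (\<lambda>t. \<forall>k<d (Suc l). \<bar>fwd \<sigma> d (W' t) ?x (Suc l) k - fwd \<sigma> d W ?x (Suc l) k\<bar> \<le> t * c xy) (at_right 0)"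
      by (auto elim!: eventually_mono)
    have "eventually (\<lambda>t. \<forall>k<d (Suc l + (L - Suc l)). \<bar>fwd \<sigma> d (W' t) ?x (Suc l + (L - Suc l)) k - fwd \<sigma> d W ?x (Suc l + (L - Suc l)) k\<bar>
            \<le> t*(c xy*Gam (\<lambda>m. K m * R) (Suc l) (L - Suc l))) (at_right 0)"
      using down_inf[OF agree base cnn R Knn _ sigl[OF xy], of "L - Suc l"] H l by auto
    hence evL: "eventually (\<lambda>t. \<forall>k<CARD('o). \<bar>fwd \<sigma> d (W' t) ?x L k - fwd \<sigma> d W ?x L k\<bar> \<le> t*(c xy*G)) (at_right 0)"
      using l dL by (simp add: G_def)
    have evS: "eventually (\<lambda>t. (\<Sum>n<CARD('o). \<bar>fwd \<sigma> d (W' t) ?x L n - fwd \<sigma> d W ?x L n\<bar>) \<le> t * (real CARD('o) * (c xy * G))) (at_right 0)"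
      using evL
    proof eventually_elim
      case (elim t)
      have "(\<Sum>n<CARD('o). \<bar>fwd \<sigma> d (W' t) ?x L n - fwd \<sigma> d W ?x L n\<bar>) \<le> (\<Sum>n<CARD('o). t*(c xy*G))"
        using elim by (intro sum_mono) auto
      thus ?case by (simp add: mult_ac)
    qed
    show ?thesis
      using loss_change[OF e_diff e_grad _ evS, of "snd xy" SE] eb xy by (simp add: net_def)
  qed
  have evD: "eventually (\<lambda>t. \<forall>xy\<in>D. e (net \<sigma> L d (W' t) (fst xy)) (snd xy) - e (net \<sigma> L d W (fst xy)) (snd xy)
      \<le> (b3 SE + 1) * (t * (real CARD('o) * (c xy * G)))) (at_right 0)"
    using evx finD by (intro eventually_ball_finite) auto
  obtain \<epsilon> where \<epsilon>: "\<epsilon> > 0" and \<epsilon>m: "\<forall>W''. (\<forall>m\<in>{1..L}. \<forall>i<d (m-1). \<forall>k<d m. \<bar>W'' m i k - W m i k\<bar> < \<epsilon>) \<longrightarrow> E d W \<le> E d W''"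
    using lm unfolding is_local_min_def E_def by blast
  have "\<forall>k\<in>{..<d (Suc l)}. eventually (\<lambda>t. t * \<bar>W (Suc l) j k\<bar> < \<epsilon>) (at_right (0::real))"
  proof
    fix k
    have "((\<lambda>t. t * \<bar>W (Suc l) j k\<bar>) \<longlongrightarrow> 0 * \<bar>W (Suc l) j k\<bar>) (at_right (0::real))"
      by (intro tendsto_intros)
    thus "eventually (\<lambda>t. t * \<bar>W (Suc l) j k\<bar> < \<epsilon>) (at_right (0::real))"
      using \<epsilon> by (auto dest: order_tendstoD(2))
  qed
  hence evW: "eventually (\<lambda>t. \<forall>k\<in>{..<d (Suc l)}. t * \<bar>W (Suc l) j k\<bar> < \<epsilon>) (at_right (0::real))"
    by (intro eventually_ball_finite) auto
  have ev1: "eventually (\<lambda>t. t < 1) (at_right (0::real))"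
    unfolding eventually_at_right_field by (intro exI[of _ 1]) auto
  have "eventually (\<lambda>t. False) (at_right (0::real)) \<or> ?thesis"
  proof -
    have "eventually (\<lambda>t. card D > 0 \<and> lam * real (card D) \<le> (b3 SE + 1) * real CARD('o) * K (Suc l) * G
            * (\<Sum>xy\<in>D. \<bar>fwd \<sigma> d W (fst xy) l j\<bar>)) (at_right (0::real))"
      using evD evW ev1 eventually_at_right_less[of "0::real"]
    proof eventually_elim
      case (elim t)
      have t: "0 < t" "t < 1" using elim by auto
      have close: "\<forall>m\<in>{1..L}. \<forall>i<d (m-1). \<forall>k<d m. \<bar>W' t m i k - W m i k\<bar> < \<epsilon>"
      proof (intro ballI allI impI)
        fix m i k assume "m \<in> {1..L}" "i < d (m-1)" "k < d m"
        thus "\<bar>W' t m i k - W m i k\<bar> < \<epsilon>"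
          using elim(2) \<epsilon> t by (cases "m = Suc l \<and> i = j") (auto simp: W'_def algebra_simps abs_mult)
      qed
      have le: "E d W \<le> E d (W' t)" using \<epsilon>m close by blast
      have Om: "Omega_out lam p L d (W' t) = Omega_out lam p L d W - lam * (t * P)"
      proof -
        define T where "T W'' m i = (\<Sum>k<d m. \<bar>W'' m i k\<bar> powr p) powr (1/p)" for W'' :: "nat \<Rightarrow> nat \<Rightarrow> nat \<Rightarrow> real" and m i :: nat
        have TW': "T (W' t) m i = T W m i - (if m = Suc l \<and> i = j then t * P else 0)" for m i
        proof (cases "m = Suc l \<and> i = j")
          case True
          have "T (W' t) m i = (\<Sum>k<d (Suc l). \<bar>(1-t) * W (Suc l) j k\<bar> powr p) powr (1/p)"
            using True by (simp add: T_def W'_def)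
          also have "\<dots> = (1-t) * P" unfolding P_def using t p by (intro pnorm_scale) auto
          finally show ?thesis using True by (simp add: T_def P_def algebra_simps)
        qed (auto simp: T_def W'_def)
        have "(\<Sum>m\<in>{1..L}. \<Sum>i<d (m-1). T (W' t) m i) = (\<Sum>m\<in>{1..L}. \<Sum>i<d (m-1). T W m i)
            - (\<Sum>m\<in>{1..L}. \<Sum>i<d (m-1). (if m = Suc l \<and> i = j then t * P else 0))"
          by (simp add: TW' sum_subtractf)
        also have "(\<Sum>m\<in>{1..L}. \<Sum>i<d (m-1). (if m = Suc l \<and> i = j then t * P else 0)) = t * P"
        proof -
          have "(\<Sum>m\<in>{1..L}. \<Sum>i<d (m-1). (if m = Suc l \<and> i = j then t * P else 0))
              = (\<Sum>m\<in>{1..L}. (if m = Suc l then t * P else 0))"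
            using j by (intro sum.cong) auto
          also have "\<dots> = t * P" using l by simp
          finally show ?thesis .
        qed
        finally have h: "(\<Sum>m\<in>{1..L}. \<Sum>i<d (m-1). T (W' t) m i) = (\<Sum>m\<in>{1..L}. \<Sum>i<d (m-1). T W m i) - t * P" .
        show ?thesis unfolding Omega_out_def using h unfolding T_def by (simp add: right_diff_distrib)
      qed
      define Ls where "Ls W'' = (\<Sum>(x,y)\<in>D. e (net \<sigma> L d W'' x) y)" for W''
      have Ediff: "Ls W / real (card D) + Omega_out lam p L d W \<le> Ls (W' t) / real (card D) + Omega_out lam p L d (W' t)"
        using le by (simp add: E_def energy_def Ls_def)
      have Lsd: "Ls (W' t) - Ls W \<le> t * P * ((b3 SE + 1) * real CARD('o) * K (Suc l) * G * (\<Sum>xy\<in>D. \<bar>fwd \<sigma> d W (fst xy) l j\<bar>))"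
      proof -
        have "Ls (W' t) - Ls W = (\<Sum>xy\<in>D. e (net \<sigma> L d (W' t) (fst xy)) (snd xy) - e (net \<sigma> L d W (fst xy)) (snd xy))"
          by (simp add: Ls_def sum_subtractf case_prod_unfold)
        also have "\<dots> \<le> (\<Sum>xy\<in>D. (b3 SE + 1) * (t * (real CARD('o) * (c xy * G))))"
          using elim(1) by (intro sum_mono) auto
        also have "\<dots> = t * P * ((b3 SE + 1) * real CARD('o) * K (Suc l) * G * (\<Sum>xy\<in>D. \<bar>fwd \<sigma> d W (fst xy) l j\<bar>))"
          by (simp add: c_def sum_distrib_left mult_ac)
        finally show ?thesis .
      qed
      have cD: "card D > 0"
      proof (rule ccontr)
        assume "\<not> card D > 0"
        hence "card D = 0" by simp
        hence "lam * (t * P) \<le> 0" using Ediff Om by simp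
        moreover have "lam * (t * P) > 0" using lam t Ppos by simp
        ultimately show False by simp
      qed
      have "lam * (t * P) \<le> (Ls (W' t) - Ls W) / real (card D)"
        using Ediff Om by (simp add: diff_divide_distrib)
      hence "lam * (t * P) * real (card D) \<le> Ls (W' t) - Ls W"
        using cD by (simp add: le_divide_eq)
      hence "(t * P) * (lam * real (card D)) \<le> (t * P) * ((b3 SE + 1) * real CARD('o) * K (Suc l) * G * (\<Sum>xy\<in>D. \<bar>fwd \<sigma> d W (fst xy) l j\<bar>))"
        using Lsd by (simp add: mult_ac)
      hence "lam * real (card D) \<le> (b3 SE + 1) * real CARD('o) * K (Suc l) * G * (\<Sum>xy\<in>D. \<bar>fwd \<sigma> d W (fst xy) l j\<bar>)"
        using t Ppos by (subst (asm) mult_le_cancel_left_pos) auto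
      thus ?case using cD by simp
    qed
    thus ?thesis unfolding K_def G_def A_def by (auto dest: eventually_happens)
  qed
  thus ?thesis by simp
qed

lemma unit_in:
  fixes \<sigma> :: "nat \<Rightarrow> real \<Rightarrow> real" and e :: "real^'o::finite \<Rightarrow> 'y \<Rightarrow> real"
    and D :: "((nat \<Rightarrow> real) \<times> 'y) set"
  assumes finD: "finite D"
    and SL: "\<forall>m\<in>{1..L}. \<forall>S z. \<bar>z\<bar> \<le> S \<longrightarrow> (\<exists>\<delta>>0. \<forall>h. \<bar>h\<bar> < \<delta> \<longrightarrow> \<bar>\<sigma> m (z+h) - \<sigma> m z\<bar> \<le> (\<bar>b2 m S\<bar> + 1)*\<bar>h\<bar>)"
    and hb1: "\<forall>l\<in>{1..L}. \<forall>S s. \<bar>s\<bar> \<le> S \<longrightarrow> \<bar>\<sigma> l s\<bar> \<le> b1 l S * \<bar>s\<bar>"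
    and b1nn: "\<forall>l\<in>{1..L}. \<forall>S\<ge>0. b1 l S \<ge> 0"
    and e_diff: "\<forall>v y. (\<lambda>w. e w y) differentiable (at v)"
    and e_grad: "\<forall>S v y De. e v y \<le> S \<longrightarrow> ((\<lambda>w. e w y) has_derivative De) (at v) \<longrightarrow>
         (\<forall>k. \<bar>De (axis k 1)\<bar> \<le> b3 S)"
    and lam: "lam > 0" and p: "p > 0"
    and X0: "X0 \<ge> 0" and X0D: "\<forall>xy\<in>D. (\<Sum>i<d 0. \<bar>fst xy i\<bar>) \<le> X0"
    and R: "R \<ge> 0"
    and H: "\<forall>m\<in>{1..L}. \<forall>i<d (m-1). (\<Sum>k<d m. \<bar>W m i k\<bar>) \<le> R"
    and eb: "\<forall>xy\<in>D. e (net \<sigma> L d W (fst xy)) (snd xy) \<le> SE"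
    and dL: "d L = CARD('o)"
    and lm: "is_local_min (energy \<sigma> e D (Omega_in lam p L) L) L d W"
    and l: "1 \<le> l" "l < L" and j: "j < d l"
    and w: "i0 < d (l-1)" "W l i0 j \<noteq> 0"
  shows "card D > 0 \<and> lam \<le> (b3 SE + 1) * (\<bar>b2 (Suc l) (Abd b1 X0 R l * R)\<bar> + 1) * (\<bar>b2 l (Abd b1 X0 R (l-1) * R)\<bar> + 1)
      * Abd b1 X0 R (l-1) * Gam (\<lambda>m. (\<bar>b2 m (Abd b1 X0 R (m-1) * R)\<bar> + 1) * R) (Suc l) (L - Suc l)
      * (\<Sum>k<d (Suc l). \<bar>W (Suc l) j k\<bar>)"
proof -
  obtain l0 where l0: "l = Suc l0" using l by (cases l) auto
  define A where "A = Abd b1 X0 R"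
  define K where "K m = \<bar>b2 m (A (m-1) * R)\<bar> + 1" for m
  define G where "G = Gam (\<lambda>m. K m * R) (Suc l) (L - Suc l)"
  define P where "P = (\<Sum>i<d l0. \<bar>W l i j\<bar> powr p) powr (1/p)"
  define V where "V = (\<Sum>k<d (Suc l). \<bar>W (Suc l) j k\<bar>)"
  define W' where "W' t = W(l := (\<lambda>i k. if k = j then (1-t) * W l i k else W l i k))" for t :: real
  define E where "E = energy \<sigma> e D (Omega_in lam p L) L"
  have Knn: "\<forall>m. K m \<ge> 0" unfolding K_def by simp
  have Gnn: "G \<ge> 0" unfolding G_def using Knn R by (intro Gam_nonneg) auto
  have Vnn: "V \<ge> 0" unfolding V_def by (simp add: sum_nonneg)
  have Pk: "\<bar>W l i j\<bar> \<le> P" if "i < d l0" for i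
    unfolding P_def using that p by (intro entry_le_pnorm) auto
  have Ppos: "P > 0" using Pk[of i0] w l0 by simp
  have Ann: "A m \<ge> 0" if "m \<le> L" for m unfolding A_def using Abd_nonneg[OF b1nn X0 R] that by blast
  have act: "(\<Sum>k<d m. \<bar>fwd \<sigma> d W (fst xy) m k\<bar>) \<le> A m" if "xy \<in> D" "m \<le> L" for xy m
    unfolding A_def using act_1[OF hb1 b1nn X0 R H] X0D that by blast
  have preb: "\<bar>pre \<sigma> d W (fst xy) m k\<bar> \<le> A m * R" if "xy \<in> D" "m < L" "k < d (Suc m)" for xy m k
  proof -
    have "(\<Sum>k<d (Suc m). \<bar>pre \<sigma> d W (fst xy) m k\<bar>) \<le> A m * R"
    proof (rule pre_bound_1)
      show "(\<Sum>i<d m. \<bar>fwd \<sigma> d W (fst xy) m i\<bar>) \<le> A m" using act that by simp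
      show "\<forall>i<d m. (\<Sum>k<d (Suc m). \<bar>W (Suc m) i k\<bar>) \<le> R" using H that by auto
    qed (use R in simp)
    moreover have "\<bar>pre \<sigma> d W (fst xy) m k\<bar> \<le> (\<Sum>k<d (Suc m). \<bar>pre \<sigma> d W (fst xy) m k\<bar>)"
      using that by (intro member_le_sum) auto
    ultimately show ?thesis by linarith
  qed
  have prej: "\<bar>pre \<sigma> d W (fst xy) l0 j\<bar> \<le> A l0 * P" if "xy \<in> D" for xy
  proof -
    have "\<bar>pre \<sigma> d W (fst xy) l0 j\<bar> \<le> (\<Sum>i<d l0. \<bar>fwd \<sigma> d W (fst xy) l0 i\<bar> * \<bar>W l i j\<bar>)"
      unfolding pre_def l0 by (rule order_trans[OF sum_abs]) (simp add: abs_mult)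
    also have "\<dots> \<le> (\<Sum>i<d l0. \<bar>fwd \<sigma> d W (fst xy) l0 i\<bar> * P)"
      using Pk by (intro sum_mono mult_left_mono) auto
    also have "\<dots> \<le> A l0 * P" using act[OF that, of l0] l l0 Ppos
      by (simp add: sum_distrib_right[symmetric] mult_right_mono)
    finally show ?thesis .
  qed
  have fw_same: "fwd \<sigma> d (W' t) x l0 = fwd \<sigma> d W x l0" for t x
    by (rule fwd_cong) (simp add: W'_def l0)
  have pre': "pre \<sigma> d (W' t) x l0 k = pre \<sigma> d W x l0 k + (if k = j then - t * pre \<sigma> d W x l0 k else 0)" for t x k
    unfolding pre_def fw_same by (simp add: W'_def l0 sum_distrib_left algebra_simps sum_subtractf sum_negf)
  have fwl: "fwd \<sigma> d (W' t) x l k = fwd \<sigma> d W x l k + (if k = j then \<sigma> l (pre \<sigma> d W x l0 j + - t * pre \<sigma> d W x l0 j) - \<sigma> l (pre \<sigma> d W x l0 j) else 0)" for t x k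
    unfolding l0 fwd_Suc_pre pre' by (simp add: l0[symmetric])
  have preS: "pre \<sigma> d (W' t) x l k = pre \<sigma> d W x l k + (\<sigma> l (pre \<sigma> d W x l0 j + - t * pre \<sigma> d W x l0 j) - \<sigma> l (pre \<sigma> d W x l0 j)) * W (Suc l) j k" for t x k
  proof -
    have "W' t (Suc l) = W (Suc l)" by (simp add: W'_def)
    hence "pre \<sigma> d (W' t) x l k = (\<Sum>i<d l. fwd \<sigma> d W x l i * W (Suc l) i k + (if i = j then (\<sigma> l (pre \<sigma> d W x l0 j + - t * pre \<sigma> d W x l0 j) - \<sigma> l (pre \<sigma> d W x l0 j)) * W (Suc l) j k else 0))"
      unfolding pre_def fwl by (intro sum.cong) (auto simp: algebra_simps)
    also have "\<dots> = pre \<sigma> d W x l k + (\<sigma> l (pre \<sigma> d W x l0 j + - t * pre \<sigma> d W x l0 j) - \<sigma> l (pre \<sigma> d W x l0 j)) * W (Suc l) j k"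
      using j by (simp add: sum.distrib pre_def)
    finally show ?thesis .
  qed
  have agree: "\<forall>t m. Suc l < m \<longrightarrow> m \<le> L \<longrightarrow> W' t m = W m" by (simp add: W'_def)
  have sigl: "\<forall>m. Suc l < m \<longrightarrow> m \<le> L \<longrightarrow> (\<forall>k<d m. \<exists>\<delta>>0. \<forall>h. \<bar>h\<bar> < \<delta> \<longrightarrow>
        \<bar>\<sigma> m (pre \<sigma> d W (fst xy) (m-1) k + h) - \<sigma> m (pre \<sigma> d W (fst xy) (m-1) k)\<bar> \<le> K m * \<bar>h\<bar>)"
    if xy: "xy \<in> D" for xy
  proof (intro allI impI)
    fix m k assume m: "Suc l < m" "m \<le> L" and k: "k < d m"
    obtain m' where m': "m = Suc m'" using m by (cases m) auto
    have "\<bar>pre \<sigma> d W (fst xy) (m-1) k\<bar> \<le> A (m-1) * R" using preb[OF xy, of m' k] m m' k by simp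
    thus "\<exists>\<delta>>0. \<forall>h. \<bar>h\<bar> < \<delta> \<longrightarrow>
        \<bar>\<sigma> m (pre \<sigma> d W (fst xy) (m-1) k + h) - \<sigma> m (pre \<sigma> d W (fst xy) (m-1) k)\<bar> \<le> K m * \<bar>h\<bar>"
      using SL m unfolding K_def by auto
  qed
  define C where "C = K (Suc l) * (K l * (A l0 * P)) * V"
  have Cnn: "C \<ge> 0" unfolding C_def using Knn Ann Ppos Vnn l l0 by simp
  have evx: "eventually (\<lambda>t. e (net \<sigma> L d (W' t) (fst xy)) (snd xy) - e (net \<sigma> L d W (fst xy)) (snd xy)
      \<le> (b3 SE + 1) * (t * (C * G))) (at_right 0)" if xy: "xy \<in> D" for xy
  proof -
    let ?x = "fst xy"
    let ?z = "pre \<sigma> d W ?x l0 j"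
    define \<Delta> where "\<Delta> t = \<sigma> l (?z + - t * ?z) - \<sigma> l ?z" for t
    have evg: "eventually (\<lambda>t. \<bar>- t * ?z\<bar> \<le> t * (A l0 * P)) (at_right 0)"
      using eventually_at_right_less[of "0::real"]
    proof eventually_elim
      case (elim t)
      thus ?case using prej[OF xy] by (simp add: abs_mult mult_left_mono)
    qed
    have sl: "\<exists>\<delta>>0. \<forall>h. \<bar>h\<bar> < \<delta> \<longrightarrow> \<bar>\<sigma> l (?z + h) - \<sigma> l ?z\<bar> \<le> K l * \<bar>h\<bar>"
      using SL preb[OF xy, of l0 j] l l0 j unfolding K_def by auto
    have ev\<Delta>: "eventually (\<lambda>t. \<bar>\<Delta> t\<bar> \<le> t * (K l * (A l0 * P))) (at_right 0)"
      using sig_ev[OF sl evg] evg eventually_at_right_less[of "0::real"]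
    proof eventually_elim
      case (elim t)
      have "\<bar>\<Delta> t\<bar> \<le> K l * \<bar>- t * ?z\<bar>" using elim(1) by (simp add: \<Delta>_def)
      also have "\<dots> \<le> K l * (t * (A l0 * P))" using elim Knn by (intro mult_left_mono) auto
      finally show ?case by (simp add: algebra_simps)
    qed
    have "\<forall>k\<in>{..<d (Suc l)}. eventually (\<lambda>t. \<bar>fwd \<sigma> d (W' t) ?x (Suc l) k - fwd \<sigma> d W ?x (Suc l) k\<bar>
             \<le> K (Suc l) * \<bar>\<Delta> t * W (Suc l) j k\<bar>) (at_right 0)"
    proof
      fix k assume k: "k \<in> {..<d (Suc l)}"
      have evh: "eventually (\<lambda>t. \<bar>\<Delta> t * W (Suc l) j k\<bar> \<le> t * (K l * (A l0 * P) * \<bar>W (Suc l) j k\<bar>)) (at_right 0)"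
        using ev\<Delta>
      proof eventually_elim
        case (elim t)
        have "\<bar>\<Delta> t * W (Suc l) j k\<bar> = \<bar>\<Delta> t\<bar> * \<bar>W (Suc l) j k\<bar>" by (simp add: abs_mult)
        also have "\<dots> \<le> t * (K l * (A l0 * P)) * \<bar>W (Suc l) j k\<bar>" using elim by (intro mult_right_mono) auto
        finally show ?case by (simp add: mult.assoc)
      qed
      have sl2: "\<exists>\<delta>>0. \<forall>h. \<bar>h\<bar> < \<delta> \<longrightarrow> \<bar>\<sigma> (Suc l) (pre \<sigma> d W ?x l k + h) - \<sigma> (Suc l) (pre \<sigma> d W ?x l k)\<bar> \<le> K (Suc l) * \<bar>h\<bar>"
        using SL preb[OF xy, of l k] l k unfolding K_def by auto
      show "eventually (\<lambda>t. \<bar>fwd \<sigma> d (W' t) ?x (Suc l) k - fwd \<sigma> d W ?x (Suc l) k\<bar>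
             \<le> K (Suc l) * \<bar>\<Delta> t * W (Suc l) j k\<bar>) (at_right 0)"
        using sig_ev[OF sl2 evh]
        by eventually_elim (simp add: fwd_Suc_pre preS \<Delta>_def)
    qed
    hence "eventually (\<lambda>t. \<forall>k\<in>{..<d (Suc l)}. \<bar>fwd \<sigma> d (W' t) ?x (Suc l) k - fwd \<sigma> d W ?x (Suc l) k\<bar>
             \<le> K (Suc l) * \<bar>\<Delta> t * W (Suc l) j k\<bar>) (at_right 0)"
      by (intro eventually_ball_finite) auto
    hence base: "eventually (\<lambda>t. (\<Sum>k<d (Suc l). \<bar>fwd \<sigma> d (W' t) ?x (Suc l) k - fwd \<sigma> d W ?x (Suc l) k\<bar>) \<le> t * C) (at_right 0)"
      using ev\<Delta>
    proof eventually_elim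
      case (elim t)
      have "(\<Sum>k<d (Suc l). \<bar>fwd \<sigma> d (W' t) ?x (Suc l) k - fwd \<sigma> d W ?x (Suc l) k\<bar>)
          \<le> (\<Sum>k<d (Suc l). K (Suc l) * \<bar>\<Delta> t * W (Suc l) j k\<bar>)"
        using elim by (intro sum_mono) auto
      also have "\<dots> = K (Suc l) * \<bar>\<Delta> t\<bar> * V" by (simp add: V_def abs_mult sum_distrib_left mult_ac)
      also have "\<dots> \<le> K (Suc l) * (t * (K l * (A l0 * P))) * V"
        using elim Knn Vnn by (intro mult_right_mono mult_left_mono) auto
      finally show ?case by (simp add: C_def mult_ac)
    qed
    have "eventually (\<lambda>t. (\<Sum>k<d (Suc l + (L - Suc l)). \<bar>fwd \<sigma> d (W' t) ?x (Suc l + (L - Suc l)) k - fwd \<sigma> d W ?x (Suc l + (L - Suc l)) k\<bar>)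
            \<le> t*(C*Gam (\<lambda>m. K m * R) (Suc l) (L - Suc l))) (at_right 0)"
      using down_1[OF agree base Cnn R Knn _ sigl[OF xy], of "L - Suc l"] H l by auto
    hence evS: "eventually (\<lambda>t. (\<Sum>n<CARD('o). \<bar>fwd \<sigma> d (W' t) ?x L n - fwd \<sigma> d W ?x L n\<bar>) \<le> t*(C*G)) (at_right 0)"
      using l dL by (simp add: G_def)
    show ?thesis
      using loss_change[OF e_diff e_grad _ evS, of "snd xy" SE] eb xy by (simp add: net_def)
  qed
  have evD: "eventually (\<lambda>t. \<forall>xy\<in>D. e (net \<sigma> L d (W' t) (fst xy)) (snd xy) - e (net \<sigma> L d W (fst xy)) (snd xy)
      \<le> (b3 SE + 1) * (t * (C * G))) (at_right 0)"
    using evx finD by (intro eventually_ball_finite) auto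
  obtain \<epsilon> where \<epsilon>: "\<epsilon> > 0" and \<epsilon>m: "\<forall>W''. (\<forall>m\<in>{1..L}. \<forall>i<d (m-1). \<forall>k<d m. \<bar>W'' m i k - W m i k\<bar> < \<epsilon>) \<longrightarrow> E d W \<le> E d W''"
    using lm unfolding is_local_min_def E_def by blast
  have "\<forall>i\<in>{..<d l0}. eventually (\<lambda>t. t * \<bar>W l i j\<bar> < \<epsilon>) (at_right (0::real))"
  proof
    fix i
    have "((\<lambda>t. t * \<bar>W l i j\<bar>) \<longlongrightarrow> 0 * \<bar>W l i j\<bar>) (at_right (0::real))"
      by (intro tendsto_intros)
    thus "eventually (\<lambda>t. t * \<bar>W l i j\<bar> < \<epsilon>) (at_right (0::real))"
      using \<epsilon> by (auto dest: order_tendstoD(2))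
  qed
  hence evW: "eventually (\<lambda>t. \<forall>i\<in>{..<d l0}. t * \<bar>W l i j\<bar> < \<epsilon>) (at_right (0::real))"
    by (intro eventually_ball_finite) auto
  have ev1: "eventually (\<lambda>t. t < 1) (at_right (0::real))"
    unfolding eventually_at_right_field by (intro exI[of _ 1]) auto
  have "eventually (\<lambda>t. False) (at_right (0::real)) \<or> (card D > 0 \<and> lam \<le> (b3 SE + 1) * C * G / P)"
  proof -
    have "eventually (\<lambda>t. card D > 0 \<and> lam \<le> (b3 SE + 1) * C * G / P) (at_right (0::real))"
      using evD evW ev1 eventually_at_right_less[of "0::real"]
    proof eventually_elim
      case (elim t)
      have t: "0 < t" "t < 1" using elim by auto
      have close: "\<forall>m\<in>{1..L}. \<forall>i<d (m-1). \<forall>k<d m. \<bar>W' t m i k - W m i k\<bar> < \<epsilon>"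
      proof (intro ballI allI impI)
        fix m i k assume "m \<in> {1..L}" "i < d (m-1)" "k < d m"
        thus "\<bar>W' t m i k - W m i k\<bar> < \<epsilon>"
          using elim(2) \<epsilon> t l0 by (cases "m = l \<and> k = j") (auto simp: W'_def algebra_simps abs_mult)
      qed
      have le: "E d W \<le> E d (W' t)" using \<epsilon>m close by blast
      have Om: "Omega_in lam p L d (W' t) = Omega_in lam p L d W - lam * (t * P)"
      proof -
        define T where "T W'' m k = (\<Sum>i<d (m-1). \<bar>W'' m i k\<bar> powr p) powr (1/p)" for W'' :: "nat \<Rightarrow> nat \<Rightarrow> nat \<Rightarrow> real" and m k :: nat
        have TW': "T (W' t) m k = T W m k - (if m = l \<and> k = j then t * P else 0)" for m k
        proof (cases "m = l \<and> k = j")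
          case True
          have "T (W' t) m k = (\<Sum>i<d l0. \<bar>(1-t) * W l i j\<bar> powr p) powr (1/p)"
            using True l0 by (simp add: T_def W'_def)
          also have "\<dots> = (1-t) * P" unfolding P_def using t p by (intro pnorm_scale) auto
          finally show ?thesis using True l0 by (simp add: T_def P_def algebra_simps)
        qed (auto simp: T_def W'_def)
        have "(\<Sum>m\<in>{1..L}. \<Sum>k<d m. T (W' t) m k) = (\<Sum>m\<in>{1..L}. \<Sum>k<d m. T W m k)
            - (\<Sum>m\<in>{1..L}. \<Sum>k<d m. (if m = l \<and> k = j then t * P else 0))"
          by (simp add: TW' sum_subtractf)
        also have "(\<Sum>m\<in>{1..L}. \<Sum>k<d m. (if m = l \<and> k = j then t * P else 0)) = t * P"
        proof -
          have "(\<Sum>m\<in>{1..L}. \<Sum>k<d m. (if m = l \<and> k = j then t * P else 0))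
              = (\<Sum>m\<in>{1..L}. (if m = l then t * P else 0))"
            using j by (intro sum.cong) auto
          also have "\<dots> = t * P" using l by simp
          finally show ?thesis .
        qed
        finally have h: "(\<Sum>m\<in>{1..L}. \<Sum>k<d m. T (W' t) m k) = (\<Sum>m\<in>{1..L}. \<Sum>k<d m. T W m k) - t * P" .
        show ?thesis unfolding Omega_in_def using h unfolding T_def by (simp add: right_diff_distrib)
      qed
      define Ls where "Ls W'' = (\<Sum>(x,y)\<in>D. e (net \<sigma> L d W'' x) y)" for W''
      have Ediff: "Ls W / real (card D) + Omega_in lam p L d W \<le> Ls (W' t) / real (card D) + Omega_in lam p L d (W' t)"
        using le by (simp add: E_def energy_def Ls_def)
      have Lsd: "Ls (W' t) - Ls W \<le> real (card D) * ((b3 SE + 1) * (t * (C * G)))"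
      proof -
        have "Ls (W' t) - Ls W = (\<Sum>xy\<in>D. e (net \<sigma> L d (W' t) (fst xy)) (snd xy) - e (net \<sigma> L d W (fst xy)) (snd xy))"
          by (simp add: Ls_def sum_subtractf case_prod_unfold)
        also have "\<dots> \<le> (\<Sum>xy\<in>D. (b3 SE + 1) * (t * (C * G)))"
          using elim(1) by (intro sum_mono) auto
        finally show ?thesis by simp
      qed
      have cD: "card D > 0"
      proof (rule ccontr)
        assume "\<not> card D > 0"
        hence "card D = 0" by simp
        hence "lam * (t * P) \<le> 0" using Ediff Om by simp
        moreover have "lam * (t * P) > 0" using lam t Ppos by simp
        ultimately show False by simp
      qed
      have "lam * (t * P) \<le> (Ls (W' t) - Ls W) / real (card D)"
        using Ediff Om by (simp add: diff_divide_distrib)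
      hence "lam * (t * P) * real (card D) \<le> Ls (W' t) - Ls W"
        using cD by (simp add: le_divide_eq)
      hence "real (card D) * (t * (lam * P)) \<le> real (card D) * (t * ((b3 SE + 1) * C * G))"
        using Lsd by (simp add: mult_ac)
      hence "t * (lam * P) \<le> t * ((b3 SE + 1) * C * G)"
        using cD by (subst (asm) mult_le_cancel_left_pos) auto
      hence "lam * P \<le> (b3 SE + 1) * C * G"
        using t by (subst (asm) mult_le_cancel_left_pos) auto
      hence "lam \<le> (b3 SE + 1) * C * G / P" using Ppos by (simp add: le_divide_eq)
      thus ?case using cD by simp
    qed
    thus ?thesis by (auto dest: eventually_happens)
  qed
  hence "card D > 0 \<and> lam \<le> (b3 SE + 1) * C * G / P" by simp
  moreover have "(b3 SE + 1) * C * G / P = (b3 SE + 1) * K (Suc l) * K l * A l0 * G * V"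
    using Ppos by (simp add: C_def field_simps)
  ultimately show ?thesis unfolding K_def G_def A_def V_def using l0 by simp
qed

lemma count_lemma:
  fixes a :: "nat \<Rightarrow> nat \<Rightarrow> real"
  assumes uj: "\<forall>j<N. lam \<le> Kc * (\<Sum>i<n. \<bar>a i j\<bar>)" and lam: "lam > 0" and Kc: "Kc \<ge> 0" and p: "p > 0"
    and R: "R \<ge> 0" and rows: "\<forall>i<n. (\<Sum>j<N. \<bar>a i j\<bar> powr p) powr (1/p) \<le> R"
  shows "real N * lam powr p \<le> real n * R powr p * (Kc * real n) powr p"
proof -
  have rows': "(\<Sum>j<N. \<bar>a i j\<bar> powr p) \<le> R powr p" if "i < n" for i
  proof -
    have "(\<Sum>j<N. \<bar>a i j\<bar> powr p) = ((\<Sum>j<N. \<bar>a i j\<bar> powr p) powr (1/p)) powr p"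
      using p by (simp add: powr_powr sum_nonneg)
    also have "\<dots> \<le> R powr p" using rows that p by (intro powr_mono2) auto
    finally show ?thesis .
  qed
  have each: "lam powr p \<le> (Kc * real n) powr p * (\<Sum>i<n. \<bar>a i j\<bar> powr p)" if j: "j < N" for j
  proof -
    obtain i where i: "i < n" "lam \<le> Kc * real n * \<bar>a i j\<bar>"
    proof (rule ccontr)
      assume "\<not> thesis"
      hence lt: "\<forall>i<n. Kc * real n * \<bar>a i j\<bar> < lam" using that by force
      have "n > 0"
      proof (rule ccontr)
        assume "\<not> n > 0" hence "n = 0" by simp
        thus False using uj j lam by simp
      qed
      have "real n * (Kc * (\<Sum>i<n. \<bar>a i j\<bar>)) = (\<Sum>i<n. Kc * real n * \<bar>a i j\<bar>)"
        by (simp add: sum_distrib_left mult_ac)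
      also have "\<dots> < (\<Sum>i<n. lam)" using lt \<open>n > 0\<close> by (intro sum_strict_mono) auto
      also have "\<dots> = real n * lam" by simp
      finally have "Kc * (\<Sum>i<n. \<bar>a i j\<bar>) < lam" using \<open>n > 0\<close> by simp
      thus False using uj j by force
    qed
    have "lam powr p \<le> (Kc * real n * \<bar>a i j\<bar>) powr p" using i lam p by (intro powr_mono2) auto
    also have "\<dots> = (Kc * real n) powr p * \<bar>a i j\<bar> powr p" using Kc by (simp add: powr_mult)
    also have "\<dots> \<le> (Kc * real n) powr p * (\<Sum>i<n. \<bar>a i j\<bar> powr p)"
      using i by (intro mult_left_mono member_le_sum) auto
    finally show ?thesis .
  qed
  have "real N * lam powr p = (\<Sum>j<N. lam powr p)" by simp
  also have "\<dots> \<le> (\<Sum>j<N. (Kc * real n) powr p * (\<Sum>i<n. \<bar>a i j\<bar> powr p))"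
    using each by (intro sum_mono) auto
  also have "\<dots> = (Kc * real n) powr p * (\<Sum>i<n. \<Sum>j<N. \<bar>a i j\<bar> powr p)"
    by (simp add: sum_distrib_left sum.swap[of _ "{..<N}"])
  also have "\<dots> \<le> (Kc * real n) powr p * (\<Sum>i<n. R powr p)"
    using rows' by (intro mult_left_mono sum_mono) auto
  finally show ?thesis by (simp add: mult_ac)
qed

lemma proper_all:
  assumes "card {j. j < n \<and> P j} = n" "j < n" shows "P j"
proof -
  have "{j. j < n \<and> P j} = {..<n}"
    using assms(1) by (intro card_subset_eq) auto
  thus ?thesis using assms(2) by auto
qed

fun Mrec :: "(nat \<Rightarrow> real) \<Rightarrow> real \<Rightarrow> real \<Rightarrow> real \<Rightarrow> nat \<Rightarrow> nat \<Rightarrow> nat" where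
  "Mrec Kf lam p R m0 0 = m0"
| "Mrec Kf lam p R m0 (Suc q) = nat \<lceil>real (Mrec Kf lam p R m0 q) * R powr p * (Kf (Suc q) * real (Mrec Kf lam p R m0 q)) powr p / lam powr p\<rceil>"

lemma step_bound:
  assumes h: "real N * lam powr p \<le> real n * R powr p * (Kc * real n) powr p" and nM: "n \<le> M"
    and Kc: "Kc \<ge> 0" and R: "R \<ge> 0" and lam: "lam > 0" and p: "p > 0"
  shows "N \<le> nat \<lceil>real M * R powr p * (Kc * real M) powr p / lam powr p\<rceil>"
proof -
  have "real n * R powr p * (Kc * real n) powr p \<le> real M * R powr p * (Kc * real M) powr p"
    using nM Kc R p by (intro mult_mono powr_mono2 mult_left_mono) auto
  with h have "real N * lam powr p \<le> real M * R powr p * (Kc * real M) powr p" by linarith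
  hence "real N \<le> real M * R powr p * (Kc * real M) powr p / lam powr p"
    using lam by (simp add: le_divide_eq)
  hence "real N \<le> of_int \<lceil>real M * R powr p * (Kc * real M) powr p / lam powr p\<rceil>"
    using le_of_int_ceiling order_trans by blast
  thus ?thesis by linarith
qed

theorem lemma4:
  fixes \<sigma> :: "nat \<Rightarrow> real \<Rightarrow> real"
    and e :: "real^'o::finite \<Rightarrow> 'y \<Rightarrow> real"
    and D :: "((nat \<Rightarrow> real) \<times> 'y) set"
    and L d0 :: nat
    and lam p B :: real
    and \<Omega> :: "(nat \<Rightarrow> nat) \<Rightarrow> (nat \<Rightarrow> nat \<Rightarrow> nat \<Rightarrow> real) \<Rightarrow> real"
    and b1 b2 :: "nat \<Rightarrow> real \<Rightarrow> real" and b3 :: "real \<Rightarrow> real"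
  assumes finD: "finite D"
    and sig_left: "\<forall>l\<in>{1..L}. \<forall>s. \<exists>Dl. (\<sigma> l has_real_derivative Dl) (at_left s)"
    and sig_right: "\<forall>l\<in>{1..L}. \<forall>s. \<exists>Dr. (\<sigma> l has_real_derivative Dr) (at_right s)"
    and b1_nonneg: "\<forall>l\<in>{1..L}. \<forall>S\<ge>0. b1 l S \<ge> 0"
    and b2_nonneg: "\<forall>l\<in>{1..L}. \<forall>S\<ge>0. b2 l S \<ge> 0"
    and sig_b1: "\<forall>l\<in>{1..L}. \<forall>S s. \<bar>s\<bar> \<le> S \<longrightarrow> \<bar>\<sigma> l s\<bar> \<le> b1 l S * \<bar>s\<bar>"
    and sig_b2_left: "\<forall>l\<in>{1..L}. \<forall>S s Dl. \<bar>s\<bar> \<le> S \<longrightarrow>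
         (\<sigma> l has_real_derivative Dl) (at_left s) \<longrightarrow> \<bar>Dl\<bar> \<le> b2 l S"
    and sig_b2_right: "\<forall>l\<in>{1..L}. \<forall>S s Dr. \<bar>s\<bar> \<le> S \<longrightarrow>
         (\<sigma> l has_real_derivative Dr) (at_right s) \<longrightarrow> \<bar>Dr\<bar> \<le> b2 l S"
    and e_nonneg: "\<forall>v y. e v y \<ge> 0"
    and e_diff: "\<forall>v y. (\<lambda>w. e w y) differentiable (at v)"
    and b3_nonneg: "\<forall>S\<ge>0. b3 S \<ge> 0"
    and e_grad: "\<forall>S v y De. e v y \<le> S \<longrightarrow> ((\<lambda>w. e w y) has_derivative De) (at v) \<longrightarrow>
         (\<forall>k. \<bar>De (axis k 1)\<bar> \<le> b3 S)"
    and lam_pos: "lam > 0"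
    and p_ge: "1 \<le> p"
    and Omega: "\<Omega> = Omega_in lam p L \<or> \<Omega> = Omega_out lam p L"
  shows "\<exists>M::nat. \<forall>d W.
           d 0 = d0 \<and> d L = CARD('o) \<and>
           is_local_min (energy \<sigma> e D \<Omega> L) L d W \<and>
           energy \<sigma> e D \<Omega> L d W \<le> B \<and> is_proper L d W
           \<longrightarrow> (\<forall>l\<in>{1..<L}. d l \<le> M)"
proof -
  have p: "p > 0" using p_ge by simp
  note SL = sig_loc2[OF sig_left sig_right sig_b2_left sig_b2_right]
  define R where "R = B / lam"
  define SE where "SE = real (card D) * B"
  define X0 where "X0 = (\<Sum>xy\<in>D. \<Sum>i<d0. \<bar>fst xy i\<bar>)"
  define A where "A = Abd b1 X0 R"
  define Kb where "Kb m = \<bar>b2 m (A (m-1) * R)\<bar> + 1" for m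
  define Gm where "Gm l = Gam (\<lambda>m. Kb m * R) (Suc l) (L - Suc l)" for l
  define Ko where "Ko l = (b3 SE + 1) * real CARD('o) * Kb (Suc l) * Gm l * b1 l (A (l-1) * R) * A (l-1)" for l
  define Ki where "Ki l = (b3 SE + 1) * Kb (Suc l) * Kb l * A (l-1) * Gm l" for l
  define Kf where "Kf q = Ki (L - q)" for q
  define M where "M = (\<Sum>q<Suc L. Mrec Ko lam p R d0 q + Mrec Kf lam p R CARD('o) q)"
  have X0nn: "X0 \<ge> 0" unfolding X0_def by (simp add: sum_nonneg)
  show ?thesis
  proof (intro exI[of _ M] allI impI)
    fix d :: "nat \<Rightarrow> nat" and W :: "nat \<Rightarrow> nat \<Rightarrow> nat \<Rightarrow> real"
    assume asm: "d 0 = d0 \<and> d L = CARD('o) \<and> is_local_min (energy \<sigma> e D \<Omega> L) L d W \<and>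
           energy \<sigma> e D \<Omega> L d W \<le> B \<and> is_proper L d W"
    hence d0: "d 0 = d0" and dL: "d L = CARD('o)" and lm: "is_local_min (energy \<sigma> e D \<Omega> L) L d W"
      and EB: "energy \<sigma> e D \<Omega> L d W \<le> B" and pr: "is_proper L d W" by auto
    have X0D1: "\<forall>xy\<in>D. (\<Sum>i<d 0. \<bar>fst xy i\<bar>) \<le> X0"
      unfolding X0_def d0 using finD by (auto intro!: member_le_sum[of _ D "\<lambda>xy. \<Sum>i<d0. \<bar>fst xy i\<bar>", simplified] sum_nonneg)
    have X0Di: "\<forall>xy\<in>D. \<forall>i<d 0. \<bar>fst xy i\<bar> \<le> X0"
    proof (intro ballI allI impI)
      fix xy i assume "xy \<in> D" "i < d 0"
      hence "\<bar>fst xy i\<bar> \<le> (\<Sum>i<d 0. \<bar>fst xy i\<bar>)" by (intro member_le_sum) auto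
      thus "\<bar>fst xy i\<bar> \<le> X0" using X0D1 \<open>xy \<in> D\<close> by fastforce
    qed
    define Ls where "Ls = (\<Sum>(x,y)\<in>D. e (net \<sigma> L d W x) y)"
    have Lsnn: "Ls \<ge> 0" unfolding Ls_def using e_nonneg by (auto intro: sum_nonneg)
    have Omnn: "\<Omega> d W \<ge> 0" using Omega lam_pos
      by (auto simp: Omega_in_def Omega_out_def intro!: sum_nonneg mult_nonneg_nonneg)
    have EBs: "Ls / real (card D) + \<Omega> d W \<le> B" using EB by (simp add: energy_def Ls_def)
    have OmB: "\<Omega> d W \<le> B" using EBs Lsnn by (smt (verit) divide_nonneg_nonneg of_nat_0_le_iff)
    have Bnn: "B \<ge> 0" using OmB Omnn by simp
    have R: "R \<ge> 0" unfolding R_def using Bnn lam_pos by simp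
    have SEnn: "SE \<ge> 0" unfolding SE_def using Bnn by simp
    have eb: "\<forall>xy\<in>D. e (net \<sigma> L d W (fst xy)) (snd xy) \<le> SE"
    proof
      fix xy assume xy: "xy \<in> D"
      hence cD: "card D > 0" using finD card_gt_0_iff by blast
      have "Ls / real (card D) \<le> B" using EBs Omnn by linarith
      hence "Ls \<le> SE" using cD by (simp add: SE_def divide_le_eq mult.commute)
      moreover have "e (net \<sigma> L d W (fst xy)) (snd xy) \<le> Ls"
        unfolding Ls_def case_prod_unfold using xy finD e_nonneg by (intro member_le_sum) auto
      ultimately show "e (net \<sigma> L d W (fst xy)) (snd xy) \<le> SE" by linarith
    qed
    have Ann: "A m \<ge> 0" if "m \<le> L" for m unfolding A_def using Abd_nonneg[OF b1_nonneg X0nn R] that by blast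
    have Kbnn: "Kb m \<ge> 0" for m unfolding Kb_def by simp
    have Gmnn: "Gm l \<ge> 0" for l unfolding Gm_def using Kbnn R by (intro Gam_nonneg) auto
    have b3nn: "b3 SE \<ge> 0" using b3_nonneg SEnn by blast
    have fan: "(\<exists>i<d (l-1). W l i j \<noteq> 0) \<and> (\<exists>k<d (Suc l). W (Suc l) j k \<noteq> 0)" if "l \<in> {1..<L}" "j < d l" for l j
    proof -
      have "d l = proper_dim d W l" using pr that unfolding is_proper_def by blast
      thus ?thesis using proper_all[of "d l" "\<lambda>j. (\<exists>i<d (l-1). W l i j \<noteq> 0) \<and> (\<exists>k<d (Suc l). W (Suc l) j k \<noteq> 0)" j] that
        unfolding proper_dim_def by simp
    qed
    have Om_sum: "\<Omega> d W = lam * S \<Longrightarrow> S \<le> R" for S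
      using OmB lam_pos unfolding R_def by (simp add: le_divide_eq mult.commute)
    show "\<forall>l\<in>{1..<L}. d l \<le> M"
    proof (cases "\<Omega> = Omega_out lam p L")
      case True
      define T where "T m i = (\<Sum>j<d m. \<bar>W m i j\<bar> powr p) powr (1/p)" for m i
      have Tnn: "T m i \<ge> 0" for m i unfolding T_def by simp
      have sumT: "(\<Sum>m\<in>{1..L}. \<Sum>i<d (m-1). T m i) \<le> R"
        using Om_sum[of "\<Sum>m\<in>{1..L}. \<Sum>i<d (m-1). T m i"] True by (simp add: Omega_out_def T_def)
      have sumTm: "(\<Sum>i<d (m-1). T m i) \<le> R" if "m \<in> {1..L}" for m
      proof -
        have "(\<Sum>i<d (m-1). T m i) \<le> (\<Sum>m\<in>{1..L}. \<Sum>i<d (m-1). T m i)"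
          using that Tnn by (intro member_le_sum sum_nonneg) auto
        thus ?thesis using sumT by linarith
      qed
      have Tle: "T m i \<le> R" if "m \<in> {1..L}" "i < d (m-1)" for m i
      proof -
        have "T m i \<le> (\<Sum>i<d (m-1). T m i)" using that Tnn by (intro member_le_sum) auto
        thus ?thesis using sumTm[OF that(1)] by linarith
      qed
      have H: "\<forall>m\<in>{1..L}. \<forall>k<d m. (\<Sum>i<d (m-1). \<bar>W m i k\<bar>) \<le> R"
      proof (intro ballI allI impI)
        fix m k assume m: "m \<in> {1..L}" and k: "k < d m"
        have "(\<Sum>i<d (m-1). \<bar>W m i k\<bar>) \<le> (\<Sum>i<d (m-1). T m i)"
          unfolding T_def using k p by (intro sum_mono entry_le_pnorm) auto
        thus "(\<Sum>i<d (m-1). \<bar>W m i k\<bar>) \<le> R" using sumTm[OF m] by linarith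
      qed
      have lm': "is_local_min (energy \<sigma> e D (Omega_out lam p L) L) L d W" using lm True by simp
      have Konn: "Ko l \<ge> 0" if "l \<in> {1..<L}" for l
      proof -
        have "A (l-1) \<ge> 0" using that by (intro Ann) auto
        hence "A (l-1) * R \<ge> 0" using R by simp
        hence "b1 l (A (l-1) * R) \<ge> 0" using b1_nonneg that by auto
        thus ?thesis unfolding Ko_def using b3nn Kbnn Gmnn \<open>A (l-1) \<ge> 0\<close> by simp
      qed
      have layer: "real (d l) * lam powr p \<le> real (d (l-1)) * R powr p * (Ko l * real (d (l-1))) powr p"
        if l: "l \<in> {1..<L}" for l
      proof (rule count_lemma[where a = "\<lambda>i j. W l i j"])
        show "\<forall>j<d l. lam \<le> Ko l * (\<Sum>i<d (l-1). \<bar>W l i j\<bar>)"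
        proof (intro allI impI)
          fix j assume j: "j < d l"
          obtain k0 where k0: "k0 < d (Suc l)" "W (Suc l) j k0 \<noteq> 0" using fan[OF l j] by blast
          have u: "card D > 0 \<and> lam * real (card D) \<le> (b3 SE + 1) * real CARD('o) * Kb (Suc l) * Gm l
              * (\<Sum>xy\<in>D. \<bar>fwd \<sigma> d W (fst xy) l j\<bar>)"
            using unit_out[OF finD SL sig_b1 b1_nonneg e_diff e_grad lam_pos p X0nn X0Di R H eb dL lm', of l j k0] l j k0
            unfolding Kb_def Gm_def A_def by auto
          define S where "S = (\<Sum>i<d (l-1). \<bar>W l i j\<bar>)"
          have fx: "\<bar>fwd \<sigma> d W (fst xy) l j\<bar> \<le> b1 l (A (l-1) * R) * A (l-1) * S" if xy: "xy \<in> D" for xy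
          proof -
            obtain l0 where l0: "l = Suc l0" using l by (cases l) auto
            have act: "\<forall>i<d l0. \<bar>fwd \<sigma> d W (fst xy) l0 i\<bar> \<le> A l0"
              unfolding A_def using act_inf[OF sig_b1 b1_nonneg X0nn R H] X0Di xy l l0 by auto
            have p1: "\<bar>pre \<sigma> d W (fst xy) l0 j\<bar> \<le> A l0 * R"
              using pre_bound_inf[OF act Ann[of l0], of j R] H[rule_format, of "Suc l0" j] l l0 j by auto
            have p2: "\<bar>pre \<sigma> d W (fst xy) l0 j\<bar> \<le> A l0 * S"
              using pre_bound_inf[OF act Ann[of l0], of j S] l l0 unfolding S_def by auto
            have b1nn': "b1 l (A l0 * R) \<ge> 0" using b1_nonneg l l0 Ann[of l0] R by auto
            have "\<bar>fwd \<sigma> d W (fst xy) l j\<bar> \<le> b1 l (A l0 * R) * \<bar>pre \<sigma> d W (fst xy) l0 j\<bar>"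
              using sig_b1 l p1 unfolding l0 fwd_Suc_pre by auto
            also have "\<dots> \<le> b1 l (A l0 * R) * (A l0 * S)" using p2 b1nn' by (intro mult_left_mono)
            finally show ?thesis using l0 by (simp add: mult.assoc)
          qed
          have "(\<Sum>xy\<in>D. \<bar>fwd \<sigma> d W (fst xy) l j\<bar>) \<le> real (card D) * (b1 l (A (l-1) * R) * A (l-1) * S)"
            using sum_mono[of D, OF fx] by simp
          hence "lam * real (card D) \<le> (b3 SE + 1) * real CARD('o) * Kb (Suc l) * Gm l * (real (card D) * (b1 l (A (l-1) * R) * A (l-1) * S))"
            using u b3nn Kbnn Gmnn by (smt (verit) mult_left_mono mult_nonneg_nonneg of_nat_0_le_iff)
          hence "real (card D) * lam \<le> real (card D) * (Ko l * S)" by (simp add: Ko_def mult_ac)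
          thus "lam \<le> Ko l * (\<Sum>i<d (l-1). \<bar>W l i j\<bar>)" using u by (simp add: S_def)
        qed
        show "\<forall>i<d (l-1). (\<Sum>j<d l. \<bar>W l i j\<bar> powr p) powr (1/p) \<le> R"
          using Tle l unfolding T_def by auto
      qed (use lam_pos Konn[OF l] p R in auto)
      have ind: "l < L \<Longrightarrow> d l \<le> Mrec Ko lam p R d0 l" for l
      proof (induction l)
        case 0 then show ?case using d0 by simp
      next
        case (Suc l)
        have "Suc l \<in> {1..<L}" using Suc by auto
        from step_bound[OF layer[OF this] _ Konn[OF this] R lam_pos p, of "Mrec Ko lam p R d0 l"] Suc
        show ?case by simp
      qed
      show ?thesis
      proof
        fix l assume l: "l \<in> {1..<L}"
        have "d l \<le> Mrec Ko lam p R d0 l" using ind l by auto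
        also have "\<dots> \<le> M" unfolding M_def using l
          by (intro order_trans[OF _ member_le_sum[of l]]) auto
        finally show "d l \<le> M" .
      qed
    next
      case False
      hence True: "\<Omega> = Omega_in lam p L" using Omega by simp
      define T where "T m k = (\<Sum>i<d (m-1). \<bar>W m i k\<bar> powr p) powr (1/p)" for m k
      have Tnn: "T m i \<ge> 0" for m i unfolding T_def by simp
      have sumT: "(\<Sum>m\<in>{1..L}. \<Sum>k<d m. T m k) \<le> R"
        using Om_sum[of "\<Sum>m\<in>{1..L}. \<Sum>k<d m. T m k"] True by (simp add: Omega_in_def T_def)
      have sumTm: "(\<Sum>k<d m. T m k) \<le> R" if "m \<in> {1..L}" for m
      proof -
        have "(\<Sum>k<d m. T m k) \<le> (\<Sum>m\<in>{1..L}. \<Sum>k<d m. T m k)"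
          using that Tnn by (intro member_le_sum sum_nonneg) auto
        thus ?thesis using sumT by linarith
      qed
      have Tle: "T m k \<le> R" if "m \<in> {1..L}" "k < d m" for m k
      proof -
        have "T m k \<le> (\<Sum>k<d m. T m k)" using that Tnn by (intro member_le_sum) auto
        thus ?thesis using sumTm[OF that(1)] by linarith
      qed
      have H: "\<forall>m\<in>{1..L}. \<forall>i<d (m-1). (\<Sum>k<d m. \<bar>W m i k\<bar>) \<le> R"
      proof (intro ballI allI impI)
        fix m i assume m: "m \<in> {1..L}" and i: "i < d (m-1)"
        have "(\<Sum>k<d m. \<bar>W m i k\<bar>) \<le> (\<Sum>k<d m. T m k)"
          unfolding T_def using i p by (intro sum_mono entry_le_pnorm) auto
        thus "(\<Sum>k<d m. \<bar>W m i k\<bar>) \<le> R" using sumTm[OF m] by linarith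
      qed
      have lm': "is_local_min (energy \<sigma> e D (Omega_in lam p L) L) L d W" using lm True by simp
      have Kinn: "Ki l \<ge> 0" if "l \<in> {1..<L}" for l
      proof -
        have "A (l-1) \<ge> 0" using that by (intro Ann) auto
        thus ?thesis unfolding Ki_def using b3nn Kbnn Gmnn by simp
      qed
      have layer: "real (d l) * lam powr p \<le> real (d (Suc l)) * R powr p * (Ki l * real (d (Suc l))) powr p"
        if l: "l \<in> {1..<L}" for l
      proof (rule count_lemma[where a = "\<lambda>i j. W (Suc l) j i"])
        show "\<forall>j<d l. lam \<le> Ki l * (\<Sum>i<d (Suc l). \<bar>W (Suc l) j i\<bar>)"
        proof (intro allI impI)
          fix j assume j: "j < d l"
          obtain i0 where i0: "i0 < d (l-1)" "W l i0 j \<noteq> 0" using fan[OF l j] by blast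
          show "lam \<le> Ki l * (\<Sum>i<d (Suc l). \<bar>W (Suc l) j i\<bar>)"
            using unit_in[OF finD SL sig_b1 b1_nonneg e_diff e_grad lam_pos p X0nn X0D1 R H eb dL lm', of l j i0] l j i0
            unfolding Ki_def Kb_def Gm_def A_def by auto
        qed
        show "\<forall>i<d (Suc l). (\<Sum>j<d l. \<bar>W (Suc l) j i\<bar> powr p) powr (1/p) \<le> R"
          using Tle[of "Suc l"] l unfolding T_def by auto
      qed (use lam_pos Kinn[OF l] p R in auto)
      have ind: "q < L \<Longrightarrow> d (L - q) \<le> Mrec Kf lam p R CARD('o) q" for q
      proof (induction q)
        case 0 then show ?case using dL by simp
      next
        case (Suc q)
        have l: "L - Suc q \<in> {1..<L}" using Suc by auto
        have e1: "Suc (L - Suc q) = L - q" using Suc by simp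
        have "d (L - Suc q) \<le> nat \<lceil>real (Mrec Kf lam p R CARD('o) q) * R powr p * (Ki (L - Suc q) * real (Mrec Kf lam p R CARD('o) q)) powr p / lam powr p\<rceil>"
          using step_bound[OF layer[OF l] _ Kinn[OF l] R lam_pos p, of "Mrec Kf lam p R CARD('o) q"] Suc e1 by simp
        moreover have "Kf (Suc q) = Ki (L - Suc q)" by (simp add: Kf_def)
        ultimately show ?case by simp
      qed
      show ?thesis
      proof
        fix l assume l: "l \<in> {1..<L}"
        have "d l = d (L - (L - l))" using l by simp
        also have "\<dots> \<le> Mrec Kf lam p R CARD('o) (L - l)" using ind[of "L - l"] l by auto
        also have "\<dots> \<le> M" unfolding M_def using l
          by (intro order_trans[OF _ member_le_sum[of "L - l"]]) auto
        finally show "d l \<le> M" .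
      qed
    qed
  qed
qed

end
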